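(* Let $C\subset\mathbb{R}$ be a Cantor set with Newhouse thickness $\tau(C)>1$, and let $\alpha>1$. For $\beta>0$ and $\mathbf{t}\in\mathbb{R}^2$ let $$\Delta^{(\beta)}_{\mathbf{t}}(C\times C)=\{\|\mathbf{c}-\mathbf{t}\|_\beta:\mathbf{c}\in C\times C\},\qquad \|(x,y)\|_\beta=(|x|^\beta+|y|^\beta)^{1/\beta}.$$ Then for every $\mathbf{t}\in\mathbb{R}^2$ the set $\Delta^{(\alpha)}_{\mathbf{t}}(C\times C)$ has non-empty interior. Moreover there exists a non-empty open interval $I$ centered at $\alpha$ such that $\big(\bigcap_{\beta\in I}\Delta^{(\beta)}_{\mathbf{t}}(C\times C)\big)^{\circ}\neq\emptyset$.
   Context: A Cantor set is a non-empty compact, perfect, totally disconnected subset of $\mathbb{R}$. Newhouse thickness: gaps of a Cantor set $K$ are the bounded connected components of $\mathbb{R}\setminus K$; for $u$ the right endpoint of a gap $G$, the bridge is $B(u)=(u,\ell(\widetilde G))$ where $\widetilde G$ is the first gap to the right of $u$ with $|\widetilde G|\ge|G|$ and $\ell(\widetilde G)$ its left endpoint (if none exists, the bridge extends to $\max K$), symmetrically at left endpoints; $\tau(K)=\inf_u|B(u)|/|G|$ over all gap endpoints $u$. *)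

theory Defs
  imports "HOL-Analysis.Analysis"
begin

definition cantor_set :: "real set \<Rightarrow> bool" where
  "cantor_set K \<longleftrightarrow> K \<noteq> {} \<and> compact K \<and> (\<forall>x\<in>K. x islimpt K)
     \<and> (\<forall>x\<in>K. connected_component_set K x = {x})"

definition gap :: "real set \<Rightarrow> real set \<Rightarrow> bool" where
  "gap K G \<longleftrightarrow> G \<in> components (- K) \<and> bounded G"

definition glen :: "real set \<Rightarrow> real" where
  "glen G = Sup G - Inf G"

definition bridge_right :: "real set \<Rightarrow> real set \<Rightarrow> real" where
  "bridge_right K G =
    (if \<exists>G'. gap K G' \<and> Sup G \<le> Inf G' \<and> glen G \<le> glen G'
     then Inf {Inf G' | G'. gap K G' \<and> Sup G \<le> Inf G' \<and> glen G \<le> glen G'} - Sup G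
     else Sup K - Sup G)"

definition bridge_left :: "real set \<Rightarrow> real set \<Rightarrow> real" where
  "bridge_left K G =
    (if \<exists>G'. gap K G' \<and> Sup G' \<le> Inf G \<and> glen G \<le> glen G'
     then Inf G - Sup {Sup G' | G'. gap K G' \<and> Sup G' \<le> Inf G \<and> glen G \<le> glen G'}
     else Inf G - Inf K)"

definition thickness :: "real set \<Rightarrow> real" where
  "thickness K = Inf ({bridge_right K G / glen G | G. gap K G} \<union>
                      {bridge_left K G / glen G | G. gap K G})"

definition beta_norm :: "real \<Rightarrow> real \<times> real \<Rightarrow> real" where
  "beta_norm \<beta> v = (\<bar>fst v\<bar> powr \<beta> + \<bar>snd v\<bar> powr \<beta>) powr (1 / \<beta>)"

definition pinned_dist :: "real \<Rightarrow> real \<times> real \<Rightarrow> real set \<Rightarrow> real set" where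
  "pinned_dist \<beta> t C = {beta_norm \<beta> (c - t) | c. c \<in> C \<times> C}"

end

theory Submission
  imports Defs
begin


definition sys :: "real set \<Rightarrow> ('p \<Rightarrow> bool) \<Rightarrow> ('p \<Rightarrow> real) \<Rightarrow> ('p \<Rightarrow> real) \<Rightarrow> ('p \<Rightarrow> real) \<Rightarrow> real \<Rightarrow> bool" where
"sys K pc lo hi mu D \<longleftrightarrow>
 (\<forall>P. pc P \<longrightarrow> lo P \<le> hi P \<and>
   (\<exists>P1 P2. pc P1 \<and> pc P2 \<and> lo P1 = lo P \<and> hi P2 = hi P \<and> hi P1 < lo P2 \<and>
      lo P2 - hi P1 \<le> mu P \<and> mu P \<le> D * (lo P2 - hi P1) \<and>
      mu P \<le> hi P1 - lo P1 \<and> mu P \<le> hi P2 - lo P2 \<and> mu P1 \<le> mu P \<and> mu P2 \<le> mu P)) \<and>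
 (\<forall>z. z \<notin> K \<longrightarrow> (\<exists>\<eta>>0. \<forall>P. pc P \<and> lo P \<le> z \<and> z \<le> hi P \<longrightarrow> \<eta> \<le> mu P))"

lemma nested_point:
  fixes l h :: "nat \<Rightarrow> real"
  assumes "\<And>n. l n \<le> h n" "\<And>n. l n \<le> l (Suc n)" "\<And>n. h (Suc n) \<le> h n"
  shows "\<exists>z. \<forall>n. l n \<le> z \<and> z \<le> h n"
proof -
  have lm: "l m \<le> l n" if "m \<le> n" for m n using lift_Suc_mono_le[of l, OF assms(2) that] .
  have hm: "h n \<le> h m" if "m \<le> n" for m n using lift_Suc_antimono_le[of h, OF assms(3) that] .
  have a: "l m \<le> h n" for m n
    using lm[of m "max m n"] hm[of n "max m n"] assms(1)[of "max m n"] by simp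
  have bdd: "bdd_above (range l)" using a[of _ 0] by (intro bdd_aboveI[of _ "h 0"]) auto
  show ?thesis
    apply (rule exI[of _ "Sup (range l)"])
    using bdd a by (auto intro: cSup_upper cSup_least)
qed

lemma gap_lemma:
  assumes S1: "sys K1 pc1 lo1 hi1 mu1 D" and S2: "sys K2 pc2 lo2 hi2 mu2 D" and D: "D > 0"
    and "pc1 P0" "pc2 Q0" "lo1 P0 \<le> hi2 Q0" "lo2 Q0 \<le> hi1 P0"
    "mu2 Q0 \<le> hi1 P0 - lo1 P0" "mu1 P0 \<le> hi2 Q0 - lo2 Q0"
  shows "\<exists>z. z \<in> K1 \<and> z \<in> K2"
proof -
  define Inv where "Inv = (\<lambda>(P,Q). pc1 P \<and> pc2 Q \<and> lo1 P \<le> hi2 Q \<and> lo2 Q \<le> hi1 P \<and>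
     mu2 Q \<le> hi1 P - lo1 P \<and> mu1 P \<le> hi2 Q - lo2 Q)"
  define len where "len = (\<lambda>(P,Q). (hi1 P - lo1 P) + (hi2 Q - lo2 Q))"
  define Step where "Step = (\<lambda>X Y. Inv Y \<and> lo1 (fst X) \<le> lo1 (fst Y) \<and> hi1 (fst Y) \<le> hi1 (fst X) \<and>
     lo2 (snd X) \<le> lo2 (snd Y) \<and> hi2 (snd Y) \<le> hi2 (snd X) \<and>
     len Y \<le> len X - max (mu1 (fst X)) (mu2 (snd X)) / D)"
  have step: "\<exists>Y. Step X Y" if "Inv X" for X
  proof -
    obtain P Q where X: "X = (P,Q)" by force
    have I: "pc1 P" "pc2 Q" "lo1 P \<le> hi2 Q" "lo2 Q \<le> hi1 P" "mu2 Q \<le> hi1 P - lo1 P" "mu1 P \<le> hi2 Q - lo2 Q"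
      using that X Inv_def by auto
    show ?thesis
    proof (cases "mu2 Q \<le> mu1 P")
      case True
      obtain P1 P2 where P: "pc1 P1" "pc1 P2" "lo1 P1 = lo1 P" "hi1 P2 = hi1 P" "hi1 P1 < lo1 P2"
        "lo1 P2 - hi1 P1 \<le> mu1 P" "mu1 P \<le> D * (lo1 P2 - hi1 P1)"
        "mu1 P \<le> hi1 P1 - lo1 P1" "mu1 P \<le> hi1 P2 - lo1 P2" "mu1 P1 \<le> mu1 P" "mu1 P2 \<le> mu1 P"
        using S1 I(1) unfolding sys_def by blast
      have gD: "mu1 P / D \<le> lo1 P2 - hi1 P1" using P(7) D by (simp add: field_simps)
      have mx: "max (mu1 P) (mu2 Q) = mu1 P" using True by simp
      have "lo2 Q \<le> hi1 P1 \<or> lo1 P2 \<le> hi2 Q" using I P by linarith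
      then show ?thesis
      proof
        assume c: "lo2 Q \<le> hi1 P1"
        have "Step X (P1,Q)" unfolding Step_def Inv_def len_def X using I P c gD True by (auto simp: mx)
        then show ?thesis ..
      next
        assume c: "lo1 P2 \<le> hi2 Q"
        have "Step X (P2,Q)" unfolding Step_def Inv_def len_def X using I P c gD True by (auto simp: mx)
        then show ?thesis ..
      qed
    next
      case False
      obtain Q1 Q2 where Q: "pc2 Q1" "pc2 Q2" "lo2 Q1 = lo2 Q" "hi2 Q2 = hi2 Q" "hi2 Q1 < lo2 Q2"
        "lo2 Q2 - hi2 Q1 \<le> mu2 Q" "mu2 Q \<le> D * (lo2 Q2 - hi2 Q1)"
        "mu2 Q \<le> hi2 Q1 - lo2 Q1" "mu2 Q \<le> hi2 Q2 - lo2 Q2" "mu2 Q1 \<le> mu2 Q" "mu2 Q2 \<le> mu2 Q"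
        using S2 I(2) unfolding sys_def by blast
      have gD: "mu2 Q / D \<le> lo2 Q2 - hi2 Q1" using Q(7) D by (simp add: field_simps)
      have mx: "max (mu1 P) (mu2 Q) = mu2 Q" using False by simp
      have "lo1 P \<le> hi2 Q1 \<or> lo2 Q2 \<le> hi1 P" using I Q False by linarith
      then show ?thesis
      proof
        assume c: "lo1 P \<le> hi2 Q1"
        have "Step X (P,Q1)" unfolding Step_def Inv_def len_def X using I Q c gD False by (auto simp: mx)
        then show ?thesis ..
      next
        assume c: "lo2 Q2 \<le> hi1 P"
        have "Step X (P,Q2)" unfolding Step_def Inv_def len_def X using I Q c gD False by (auto simp: mx)
        then show ?thesis ..
      qed
    qed
  qed
  define nxt where "nxt = (\<lambda>X. SOME Y. Step X Y)"
  define sq where "sq = (\<lambda>n. (nxt ^^ n) (P0,Q0))"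
  have sq0: "sq 0 = (P0,Q0)" and sqS: "sq (Suc n) = nxt (sq n)" for n by (auto simp: sq_def)
  have inv: "Inv (sq n)" for n
  proof (induction n)
    case 0 then show ?case using assms by (simp add: sq0 Inv_def)
  next
    case (Suc n) then show ?case unfolding sqS nxt_def using someI_ex[OF step[OF Suc]] Step_def by blast
  qed
  have st: "Step (sq n) (sq (Suc n))" for n
    unfolding sqS nxt_def using someI_ex[OF step[OF inv[of n]]] .
  have lohi1: "lo1 P \<le> hi1 P" if "pc1 P" for P using S1 that unfolding sys_def by blast
  have lohi2: "lo2 P \<le> hi2 P" if "pc2 P" for P using S2 that unfolding sys_def by blast
  define l where "l = (\<lambda>n. max (lo1 (fst (sq n))) (lo2 (snd (sq n))))"
  define h where "h = (\<lambda>n. min (hi1 (fst (sq n))) (hi2 (snd (sq n))))"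
  have "\<exists>z. \<forall>n. l n \<le> z \<and> z \<le> h n"
  proof (rule nested_point)
    fix n
    show "l n \<le> h n" using inv[of n] lohi1 lohi2 unfolding l_def h_def Inv_def
      by (auto split: prod.splits)
    show "l n \<le> l (Suc n)" using st[of n] unfolding l_def Step_def by auto
    show "h (Suc n) \<le> h n" using st[of n] unfolding h_def Step_def by auto
  qed
  then obtain z where z: "\<And>n. l n \<le> z \<and> z \<le> h n" by blast
  have lenpos: "0 \<le> len (sq n)" for n using inv[of n] lohi1 lohi2 unfolding len_def Inv_def
    by (auto split: prod.splits)
  have decay: False if H: "\<And>n. \<eta> \<le> max (mu1 (fst (sq n))) (mu2 (snd (sq n)))" "\<eta> > 0" for \<eta>
  proof -
    have "len (sq n) \<le> len (sq 0) - real n * (\<eta> / D)" for n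
    proof (induction n)
      case 0 then show ?case by simp
    next
      case (Suc n)
      have "len (sq (Suc n)) \<le> len (sq n) - max (mu1 (fst (sq n))) (mu2 (snd (sq n))) / D"
        using st[of n] Step_def by auto
      moreover have "\<eta> / D \<le> max (mu1 (fst (sq n))) (mu2 (snd (sq n))) / D"
        using H(1)[of n] D by (simp add: divide_right_mono)
      ultimately show ?case using Suc by (simp add: algebra_simps)
    qed
    moreover obtain n where "len (sq 0) < real n * (\<eta> / D)"
      using reals_Archimedean3[of "\<eta>/D"] H(2) D by auto
    ultimately show False using lenpos[of n] by (smt (verit))
  qed
  have "z \<in> K1"
  proof (rule ccontr)
    assume "z \<notin> K1"
    then obtain \<eta> where e: "\<eta> > 0" "\<And>P. pc1 P \<and> lo1 P \<le> z \<and> z \<le> hi1 P \<Longrightarrow> \<eta> \<le> mu1 P"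
      using S1 unfolding sys_def by blast
    have "\<eta> \<le> max (mu1 (fst (sq n))) (mu2 (snd (sq n)))" for n
      using e(2)[of "fst (sq n)"] z[of n] inv[of n] unfolding l_def h_def Inv_def
      by (auto split: prod.splits)
    then show False using decay e(1) by blast
  qed
  moreover have "z \<in> K2"
  proof (rule ccontr)
    assume "z \<notin> K2"
    then obtain \<eta> where e: "\<eta> > 0" "\<And>P. pc2 P \<and> lo2 P \<le> z \<and> z \<le> hi2 P \<Longrightarrow> \<eta> \<le> mu2 P"
      using S2 unfolding sys_def by blast
    have "\<eta> \<le> max (mu1 (fst (sq n))) (mu2 (snd (sq n)))" for n
      using e(2)[of "snd (sq n)"] z[of n] inv[of n] unfolding l_def h_def Inv_def
      by (auto split: prod.splits)
    then show False using decay e(1) by blast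
  qed
  ultimately show ?thesis by blast
qed



definition bsys :: "real set \<Rightarrow> ('p \<Rightarrow> bool) \<Rightarrow> ('p \<Rightarrow> real) \<Rightarrow> ('p \<Rightarrow> real) \<Rightarrow> ('p \<Rightarrow> real) \<Rightarrow> real \<Rightarrow> bool" where
"bsys K pc lo hi g \<tau> \<longleftrightarrow>
  (\<forall>P. pc P \<longrightarrow> lo P \<in> K \<and> hi P \<in> K \<and> lo P < hi P \<and> 0 < g P \<and>
     (\<exists>P1 P2. pc P1 \<and> pc P2 \<and> lo P1 = lo P \<and> hi P2 = hi P \<and> lo P2 - hi P1 = g P \<and>
        \<tau> * g P \<le> hi P1 - lo P1 \<and> \<tau> * g P \<le> hi P2 - lo P2 \<and> g P1 \<le> g P \<and> g P2 \<le> g P \<and>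
        (\<forall>z. hi P1 < z \<and> z < lo P2 \<longrightarrow> z \<notin> K))) \<and>
  (\<forall>z. z \<notin> K \<longrightarrow> (\<exists>\<eta>>0. \<forall>P. pc P \<and> lo P \<le> z \<and> z \<le> hi P \<longrightarrow> \<eta> \<le> g P)) \<and>
  (\<forall>x y. x < y \<longrightarrow> (\<exists>z. x < z \<and> z < y \<and> z \<notin> K))"

lemma bsysD:
  assumes "bsys K pc lo hi g \<tau>"
  shows bsys_piece: "\<And>P. pc P \<Longrightarrow> lo P \<in> K \<and> hi P \<in> K \<and> lo P < hi P \<and> 0 < g P"
  and bsys_split: "\<And>P. pc P \<Longrightarrow> (\<exists>P1 P2. pc P1 \<and> pc P2 \<and> lo P1 = lo P \<and> hi P2 = hi P \<and> lo P2 - hi P1 = g P \<and>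
        \<tau> * g P \<le> hi P1 - lo P1 \<and> \<tau> * g P \<le> hi P2 - lo P2 \<and> g P1 \<le> g P \<and> g P2 \<le> g P \<and>
        (\<forall>z. hi P1 < z \<and> z < lo P2 \<longrightarrow> z \<notin> K))"
  and bsys_hole: "\<And>z. z \<notin> K \<Longrightarrow> (\<exists>\<eta>>0. \<forall>P. pc P \<and> lo P \<le> z \<and> z \<le> hi P \<longrightarrow> \<eta> \<le> g P)"
  and bsys_nonint: "\<And>x y. x < y \<Longrightarrow> (\<exists>z. x < z \<and> z < y \<and> z \<notin> K)"
  using assms unfolding bsys_def by blast+

lemma bsysI:
  assumes "\<And>P. pc P \<Longrightarrow> lo P \<in> K \<and> hi P \<in> K \<and> lo P < hi P \<and> 0 < g P"
  and "\<And>P. pc P \<Longrightarrow> (\<exists>P1 P2. pc P1 \<and> pc P2 \<and> lo P1 = lo P \<and> hi P2 = hi P \<and> lo P2 - hi P1 = g P \<and>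
        \<tau> * g P \<le> hi P1 - lo P1 \<and> \<tau> * g P \<le> hi P2 - lo P2 \<and> g P1 \<le> g P \<and> g P2 \<le> g P \<and>
        (\<forall>z. hi P1 < z \<and> z < lo P2 \<longrightarrow> z \<notin> K))"
  and "\<And>z. z \<notin> K \<Longrightarrow> (\<exists>\<eta>>0. \<forall>P. pc P \<and> lo P \<le> z \<and> z \<le> hi P \<longrightarrow> \<eta> \<le> g P)"
  and "\<And>x y. x < y \<Longrightarrow> (\<exists>z. x < z \<and> z < y \<and> z \<notin> K)"
  shows "bsys K pc lo hi g \<tau>"
  using assms unfolding bsys_def by blast

lemma bsys_translate:
  assumes B: "bsys K pc lo hi g \<tau>"
  shows "bsys ((\<lambda>x. x + c) ` K) pc (\<lambda>P. lo P + c) (\<lambda>P. hi P + c) g \<tau>"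
proof (rule bsysI)
  have mem: "x + c \<in> (\<lambda>x. x + c) ` K \<longleftrightarrow> x \<in> K" for x by auto
  fix P assume "pc P"
  then obtain P1 P2 where P: "pc P1 \<and> pc P2 \<and> lo P1 = lo P \<and> hi P2 = hi P \<and> lo P2 - hi P1 = g P \<and>
        \<tau> * g P \<le> hi P1 - lo P1 \<and> \<tau> * g P \<le> hi P2 - lo P2 \<and> g P1 \<le> g P \<and> g P2 \<le> g P \<and>
        (\<forall>z. hi P1 < z \<and> z < lo P2 \<longrightarrow> z \<notin> K)" and P': "lo P \<in> K \<and> hi P \<in> K \<and> lo P < hi P \<and> 0 < g P"
    using bsys_split[OF B] bsys_piece[OF B] by blast+
  show "lo P + c \<in> (\<lambda>x. x + c) ` K \<and> hi P + c \<in> (\<lambda>x. x + c) ` K \<and> lo P + c < hi P + c \<and> 0 < g P"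
    using P' by auto
  have nz: "\<forall>z. hi P1 + c < z \<and> z < lo P2 + c \<longrightarrow> z \<notin> (\<lambda>x. x + c) ` K"
  proof (intro allI impI)
    fix z assume "hi P1 + c < z \<and> z < lo P2 + c"
    then have "z - c \<notin> K" using P by auto
    then show "z \<notin> (\<lambda>x. x + c) ` K" by (metis mem diff_add_cancel)
  qed
  show "\<exists>P1 P2. pc P1 \<and> pc P2 \<and> lo P1 + c = lo P + c \<and> hi P2 + c = hi P + c \<and> (lo P2 + c) - (hi P1 + c) = g P \<and>
        \<tau> * g P \<le> (hi P1 + c) - (lo P1 + c) \<and> \<tau> * g P \<le> (hi P2 + c) - (lo P2 + c) \<and> g P1 \<le> g P \<and> g P2 \<le> g P \<and>
        (\<forall>z. hi P1 + c < z \<and> z < lo P2 + c \<longrightarrow> z \<notin> (\<lambda>x. x + c) ` K)"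
    apply (rule exI[of _ P1], rule exI[of _ P2])
    using P nz by auto
next
  have mem: "x + c \<in> (\<lambda>x. x + c) ` K \<longleftrightarrow> x \<in> K" for x by auto
  fix z assume "z \<notin> (\<lambda>x. x + c) ` K"
  then have "z - c \<notin> K" by (metis (no_types, lifting) diff_add_cancel image_eqI)
  then obtain \<eta> where "\<eta> > 0" "\<forall>P. pc P \<and> lo P \<le> z - c \<and> z - c \<le> hi P \<longrightarrow> \<eta> \<le> g P"
    using bsys_hole[OF B] by blast
  then show "\<exists>\<eta>>0. \<forall>P. pc P \<and> lo P + c \<le> z \<and> z \<le> hi P + c \<longrightarrow> \<eta> \<le> g P"
    by (auto simp: algebra_simps)
next
  have mem: "x + c \<in> (\<lambda>x. x + c) ` K \<longleftrightarrow> x \<in> K" for x by auto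
  fix x y :: real assume "x < y"
  then obtain z where "x - c < z \<and> z < y - c \<and> z \<notin> K" using bsys_nonint[OF B, of "x - c" "y - c"] by auto
  then show "\<exists>z. x < z \<and> z < y \<and> z \<notin> (\<lambda>x. x + c) ` K"
    by (intro exI[of _ "z + c"]) (auto simp: mem)
qed

lemma bsys_reflect:
  assumes B: "bsys K pc lo hi g \<tau>"
  shows "bsys (uminus ` K) pc (\<lambda>P. - hi P) (\<lambda>P. - lo P) g \<tau>"
proof (rule bsysI)
  have mem: "- x \<in> uminus ` K \<longleftrightarrow> x \<in> K" for x by auto
  fix P assume "pc P"
  then obtain P1 P2 where P: "pc P1 \<and> pc P2 \<and> lo P1 = lo P \<and> hi P2 = hi P \<and> lo P2 - hi P1 = g P \<and>
        \<tau> * g P \<le> hi P1 - lo P1 \<and> \<tau> * g P \<le> hi P2 - lo P2 \<and> g P1 \<le> g P \<and> g P2 \<le> g P \<and>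
        (\<forall>z. hi P1 < z \<and> z < lo P2 \<longrightarrow> z \<notin> K)" and P': "lo P \<in> K \<and> hi P \<in> K \<and> lo P < hi P \<and> 0 < g P"
    using bsys_split[OF B] bsys_piece[OF B] by blast+
  show "- hi P \<in> uminus ` K \<and> - lo P \<in> uminus ` K \<and> - hi P < - lo P \<and> 0 < g P"
    using P' by auto
  have nz: "\<forall>z. - lo P2 < z \<and> z < - hi P1 \<longrightarrow> z \<notin> uminus ` K"
  proof (intro allI impI)
    fix z assume "- lo P2 < z \<and> z < - hi P1"
    then have "- z \<notin> K" using P by auto
    then show "z \<notin> uminus ` K" by (metis mem minus_minus)
  qed
  show "\<exists>P1 P2. pc P1 \<and> pc P2 \<and> - hi P1 = - hi P \<and> - lo P2 = - lo P \<and> (- hi P2) - (- lo P1) = g P \<and>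
        \<tau> * g P \<le> (- lo P1) - (- hi P1) \<and> \<tau> * g P \<le> (- lo P2) - (- hi P2) \<and> g P1 \<le> g P \<and> g P2 \<le> g P \<and>
        (\<forall>z. - lo P1 < z \<and> z < - hi P2 \<longrightarrow> z \<notin> uminus ` K)"
    apply (rule exI[of _ P2], rule exI[of _ P1])
    using P nz by auto
next
  have mem: "- x \<in> uminus ` K \<longleftrightarrow> x \<in> K" for x by auto
  fix z assume "z \<notin> uminus ` K"
  then have "- z \<notin> K" by (metis mem minus_minus)
  then obtain \<eta> where "\<eta> > 0" "\<forall>P. pc P \<and> lo P \<le> - z \<and> - z \<le> hi P \<longrightarrow> \<eta> \<le> g P"
    using bsys_hole[OF B] by blast
  then show "\<exists>\<eta>>0. \<forall>P. pc P \<and> - hi P \<le> z \<and> z \<le> - lo P \<longrightarrow> \<eta> \<le> g P"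
    by (auto simp: algebra_simps)
next
  have mem: "- x \<in> uminus ` K \<longleftrightarrow> x \<in> K" for x by auto
  fix x y :: real assume "x < y"
  then obtain z where "- y < z \<and> z < - x \<and> z \<notin> K" using bsys_nonint[OF B, of "- y" "- x"] by auto
  then show "\<exists>z. x < z \<and> z < y \<and> z \<notin> uminus ` K"
    by (intro exI[of _ "- z"]) (auto simp: mem)
qed



lemma sysD:
  assumes "sys K pc lo hi mu D"
  shows sys_split: "\<And>P. pc P \<Longrightarrow> lo P \<le> hi P \<and>
   (\<exists>P1 P2. pc P1 \<and> pc P2 \<and> lo P1 = lo P \<and> hi P2 = hi P \<and> hi P1 < lo P2 \<and>
      lo P2 - hi P1 \<le> mu P \<and> mu P \<le> D * (lo P2 - hi P1) \<and>
      mu P \<le> hi P1 - lo P1 \<and> mu P \<le> hi P2 - lo P2 \<and> mu P1 \<le> mu P \<and> mu P2 \<le> mu P)"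
  and sys_hole: "\<And>z. z \<notin> K \<Longrightarrow> (\<exists>\<eta>>0. \<forall>P. pc P \<and> lo P \<le> z \<and> z \<le> hi P \<longrightarrow> \<eta> \<le> mu P)"
  using assms unfolding sys_def by blast+

lemma sysI:
  assumes "\<And>P. pc P \<Longrightarrow> lo P \<le> hi P \<and>
   (\<exists>P1 P2. pc P1 \<and> pc P2 \<and> lo P1 = lo P \<and> hi P2 = hi P \<and> hi P1 < lo P2 \<and>
      lo P2 - hi P1 \<le> mu P \<and> mu P \<le> D * (lo P2 - hi P1) \<and>
      mu P \<le> hi P1 - lo P1 \<and> mu P \<le> hi P2 - lo P2 \<and> mu P1 \<le> mu P \<and> mu P2 \<le> mu P)"
  and "\<And>z. z \<notin> K \<Longrightarrow> (\<exists>\<eta>>0. \<forall>P. pc P \<and> lo P \<le> z \<and> z \<le> hi P \<longrightarrow> \<eta> \<le> mu P)"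
  shows "sys K pc lo hi mu D"
  using assms unfolding sys_def by blast

lemma sys_reflect:
  assumes S: "sys K pc lo hi mu D"
  shows "sys (uminus ` K) pc (\<lambda>P. - hi P) (\<lambda>P. - lo P) mu D"
proof (rule sysI)
  fix P assume "pc P"
  then obtain P1 P2 where P: "pc P1 \<and> pc P2 \<and> lo P1 = lo P \<and> hi P2 = hi P \<and> hi P1 < lo P2 \<and>
      lo P2 - hi P1 \<le> mu P \<and> mu P \<le> D * (lo P2 - hi P1) \<and>
      mu P \<le> hi P1 - lo P1 \<and> mu P \<le> hi P2 - lo P2 \<and> mu P1 \<le> mu P \<and> mu P2 \<le> mu P" and "lo P \<le> hi P"
    using sys_split[OF S] by blast
  then show "- hi P \<le> - lo P \<and>
   (\<exists>P1 P2. pc P1 \<and> pc P2 \<and> - hi P1 = - hi P \<and> - lo P2 = - lo P \<and> - lo P1 < - hi P2 \<and>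
      (- hi P2) - (- lo P1) \<le> mu P \<and> mu P \<le> D * ((- hi P2) - (- lo P1)) \<and>
      mu P \<le> (- lo P1) - (- hi P1) \<and> mu P \<le> (- lo P2) - (- hi P2) \<and> mu P1 \<le> mu P \<and> mu P2 \<le> mu P)"
    apply (intro conjI)
    apply simp
    apply (rule exI[of _ P2], rule exI[of _ P1])
    using P by (auto simp: algebra_simps)
next
  fix z assume "z \<notin> uminus ` K"
  then have "- z \<notin> K" by force
  then obtain \<eta> where "\<eta> > 0" "\<forall>P. pc P \<and> lo P \<le> - z \<and> - z \<le> hi P \<longrightarrow> \<eta> \<le> mu P"
    using sys_hole[OF S] by blast
  then show "\<exists>\<eta>>0. \<forall>P. pc P \<and> - hi P \<le> z \<and> z \<le> - lo P \<longrightarrow> \<eta> \<le> mu P"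
    by (auto simp: algebra_simps)
qed

lemma sys_translate:
  assumes S: "sys K pc lo hi mu D"
  shows "sys ((\<lambda>x. x + c) ` K) pc (\<lambda>P. lo P + c) (\<lambda>P. hi P + c) mu D"
proof (rule sysI)
  fix P assume "pc P"
  then obtain P1 P2 where P: "pc P1 \<and> pc P2 \<and> lo P1 = lo P \<and> hi P2 = hi P \<and> hi P1 < lo P2 \<and>
      lo P2 - hi P1 \<le> mu P \<and> mu P \<le> D * (lo P2 - hi P1) \<and>
      mu P \<le> hi P1 - lo P1 \<and> mu P \<le> hi P2 - lo P2 \<and> mu P1 \<le> mu P \<and> mu P2 \<le> mu P" and "lo P \<le> hi P"
    using sys_split[OF S] by blast
  then show "lo P + c \<le> hi P + c \<and>
   (\<exists>P1 P2. pc P1 \<and> pc P2 \<and> lo P1 + c = lo P + c \<and> hi P2 + c = hi P + c \<and> hi P1 + c < lo P2 + c \<and>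
      (lo P2 + c) - (hi P1 + c) \<le> mu P \<and> mu P \<le> D * ((lo P2 + c) - (hi P1 + c)) \<and>
      mu P \<le> (hi P1 + c) - (lo P1 + c) \<and> mu P \<le> (hi P2 + c) - (lo P2 + c) \<and> mu P1 \<le> mu P \<and> mu P2 \<le> mu P)"
    apply (intro conjI)
    apply simp
    apply (rule exI[of _ P1], rule exI[of _ P2])
    using P by (auto simp: algebra_simps)
next
  fix z assume "z \<notin> (\<lambda>x. x + c) ` K"
  then have "z - c \<notin> K" by force
  then obtain \<eta> where "\<eta> > 0" "\<forall>P. pc P \<and> lo P \<le> z - c \<and> z - c \<le> hi P \<longrightarrow> \<eta> \<le> mu P"
    using sys_hole[OF S] by blast
  then show "\<exists>\<eta>>0. \<forall>P. pc P \<and> lo P + c \<le> z \<and> z \<le> hi P + c \<longrightarrow> \<eta> \<le> mu P"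
    by (auto simp: algebra_simps)
qed

lemma bsys_image:
  assumes B: "bsys K pc lo hi g \<tau>" and m: "0 < m" "m \<le> M" "M \<le> \<tau> * m"
    and cont: "continuous_on {A..B} \<psi>"
    and lip: "\<And>x y. A \<le> x \<Longrightarrow> x < y \<Longrightarrow> y \<le> B \<Longrightarrow> m*(y-x) \<le> \<psi> y - \<psi> x \<and> \<psi> y - \<psi> x \<le> M*(y-x)"
  shows "sys (\<psi> ` (K \<inter> {A..B})) (\<lambda>P. pc P \<and> A \<le> lo P \<and> hi P \<le> B) (\<lambda>P. \<psi> (lo P)) (\<lambda>P. \<psi> (hi P))
           (\<lambda>P. M * g P) (M/m)"
proof (rule sysI)
  fix P assume PP: "pc P \<and> A \<le> lo P \<and> hi P \<le> B"
  obtain P1 P2 where P: "pc P1" "pc P2" "lo P1 = lo P" "hi P2 = hi P" "lo P2 - hi P1 = g P"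
        "\<tau> * g P \<le> hi P1 - lo P1" "\<tau> * g P \<le> hi P2 - lo P2" "g P1 \<le> g P" "g P2 \<le> g P"
    using bsys_split[OF B] PP by blast
  have pi: "lo Q < hi Q" "0 < g Q" if "pc Q" for Q using bsys_piece[OF B that] by auto
  have gP: "0 < g P" using pi PP by auto
  have in1: "A \<le> lo P1" "hi P1 \<le> B" "A \<le> lo P2" "hi P2 \<le> B"
    using P PP pi[OF P(1)] pi[OF P(2)] gP by linarith+
  have l0: "m * (hi P - lo P) \<le> \<psi> (hi P) - \<psi> (lo P)" using lip[of "lo P" "hi P"] PP pi by auto
  have l1: "m * (hi P1 - lo P1) \<le> \<psi> (hi P1) - \<psi> (lo P1)" using lip[of "lo P1" "hi P1"] in1 pi[OF P(1)] by auto
  have l2: "m * (hi P2 - lo P2) \<le> \<psi> (hi P2) - \<psi> (lo P2)" using lip[of "lo P2" "hi P2"] in1 pi[OF P(2)] by auto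
  have lg: "m * g P \<le> \<psi> (lo P2) - \<psi> (hi P1) \<and> \<psi> (lo P2) - \<psi> (hi P1) \<le> M * g P"
    using lip[of "hi P1" "lo P2"] in1 P(5) gP pi[OF P(1)] pi[OF P(2)] by auto
  have "lo P < hi P" using pi PP by auto
  then have "0 \<le> m * (hi P - lo P)" using m by auto
  then have a0: "\<psi> (lo P) \<le> \<psi> (hi P)" using l0 by linarith
  have mg: "0 < m * g P" using m gP by auto
  have a1: "M * g P \<le> M / m * (\<psi> (lo P2) - \<psi> (hi P1))"
  proof -
    have "M * g P = M / m * (m * g P)" using m by simp
    also have "\<dots> \<le> M / m * (\<psi> (lo P2) - \<psi> (hi P1))"
      using lg m by (intro mult_left_mono) auto
    finally show ?thesis .
  qed
  have Mg: "M * g P \<le> m * (\<tau> * g P)" using m gP by (simp add: mult_right_mono algebra_simps)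
  have a2: "M * g P \<le> \<psi> (hi P1) - \<psi> (lo P1)"
    using Mg mult_left_mono[OF P(6), of m] m l1 by linarith
  have a3: "M * g P \<le> \<psi> (hi P2) - \<psi> (lo P2)"
    using Mg mult_left_mono[OF P(7), of m] m l2 by linarith
  have a4: "M * g P1 \<le> M * g P" "M * g P2 \<le> M * g P" using P(8,9) m by (auto intro: mult_left_mono)
  show "\<psi> (lo P) \<le> \<psi> (hi P) \<and>
         (\<exists>P1 P2. (pc P1 \<and> A \<le> lo P1 \<and> hi P1 \<le> B) \<and> (pc P2 \<and> A \<le> lo P2 \<and> hi P2 \<le> B) \<and>
            \<psi> (lo P1) = \<psi> (lo P) \<and> \<psi> (hi P2) = \<psi> (hi P) \<and> \<psi> (hi P1) < \<psi> (lo P2) \<and>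
            \<psi> (lo P2) - \<psi> (hi P1) \<le> M * g P \<and> M * g P \<le> M / m * (\<psi> (lo P2) - \<psi> (hi P1)) \<and>
            M * g P \<le> \<psi> (hi P1) - \<psi> (lo P1) \<and> M * g P \<le> \<psi> (hi P2) - \<psi> (lo P2) \<and>
            M * g P1 \<le> M * g P \<and> M * g P2 \<le> M * g P)"
    apply (intro conjI a0)
    apply (rule exI[of _ P1], rule exI[of _ P2])
    using P in1 lg mg a1 a2 a3 a4 by auto
next
  fix z assume z: "z \<notin> \<psi> ` (K \<inter> {A..B})"
  show "\<exists>\<eta>>0. \<forall>P. (pc P \<and> A \<le> lo P \<and> hi P \<le> B) \<and> \<psi> (lo P) \<le> z \<and> z \<le> \<psi> (hi P) \<longrightarrow> \<eta> \<le> M * g P"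
  proof (cases "z \<in> \<psi> ` {A..B}")
    case False
    have "\<not> ((pc P \<and> A \<le> lo P \<and> hi P \<le> B) \<and> \<psi> (lo P) \<le> z \<and> z \<le> \<psi> (hi P))" for P
    proof
      assume H: "(pc P \<and> A \<le> lo P \<and> hi P \<le> B) \<and> \<psi> (lo P) \<le> z \<and> z \<le> \<psi> (hi P)"
      then have "lo P < hi P" using bsys_piece[OF B] by blast
      moreover have "continuous_on {lo P..hi P} \<psi>"
        using continuous_on_subset[OF cont, of "{lo P..hi P}"] H by auto
      ultimately obtain x where "lo P \<le> x" "x \<le> hi P" "\<psi> x = z"
        using IVT'[of \<psi> "lo P" z "hi P"] H by auto
      then show False using False H by auto
    qed
    then show ?thesis by (intro exI[of _ 1]) auto
  next
    case True
    then obtain w where w: "w \<in> {A..B}" "\<psi> w = z" by auto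
    then have "w \<notin> K" using z by auto
    then obtain \<eta> where e: "\<eta> > 0" "\<forall>P. pc P \<and> lo P \<le> w \<and> w \<le> hi P \<longrightarrow> \<eta> \<le> g P"
      using bsys_hole[OF B] by blast
    have mono: "x < y \<Longrightarrow> \<psi> x < \<psi> y" if "A \<le> x" "y \<le> B" for x y
      using lip[of x y] that m by (smt (verit) mult_pos_pos)
    have "M * \<eta> \<le> M * g P" if H: "(pc P \<and> A \<le> lo P \<and> hi P \<le> B) \<and> \<psi> (lo P) \<le> z \<and> z \<le> \<psi> (hi P)" for P
    proof -
      have lh: "lo P < hi P" using bsys_piece[OF B] H by blast
      have "lo P \<le> w"
      proof (rule ccontr)
        assume "\<not> lo P \<le> w"
        then have "\<psi> w < \<psi> (lo P)" using mono[of w "lo P"] H w lh by auto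
        then show False using H w by auto
      qed
      moreover have "w \<le> hi P"
      proof (rule ccontr)
        assume "\<not> w \<le> hi P"
        then have "\<psi> (hi P) < \<psi> w" using mono[of "hi P" w] H w lh by auto
        then show False using H w by auto
      qed
      ultimately show ?thesis using e H m by (auto intro: mult_left_mono)
    qed
    then show ?thesis using e m by (intro exI[of _ "M * \<eta>"]) auto
  qed
qed



lemma bsys_len:
  assumes B: "bsys K pc lo hi g \<tau>" and t: "0 \<le> \<tau>" and P: "pc P"
  shows "(2*\<tau>+1) * g P \<le> hi P - lo P"
proof -
  obtain P1 P2 where Q: "pc P1" "pc P2" "lo P1 = lo P" "hi P2 = hi P" "lo P2 - hi P1 = g P"
        "\<tau> * g P \<le> hi P1 - lo P1" "\<tau> * g P \<le> hi P2 - lo P2"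
    using bsys_split[OF B P] by blast
  show ?thesis using Q by (simp add: algebra_simps)
qed

lemma bsys_descend:
  assumes B: "bsys K pc lo hi g \<tau>" and P0: "pc P0" and c: "c \<in> K" "lo P0 \<le> c" "c \<le> hi P0"
  shows "\<exists>Ps. Ps 0 = P0 \<and> (\<forall>n. pc (Ps n) \<and> lo (Ps n) \<le> c \<and> c \<le> hi (Ps n) \<and>
     lo (Ps n) \<le> lo (Ps (Suc n)) \<and> hi (Ps (Suc n)) \<le> hi (Ps n) \<and>
     hi (Ps (Suc n)) - lo (Ps (Suc n)) \<le> hi (Ps n) - lo (Ps n) - g (Ps n) \<and>
     \<tau> * g (Ps n) \<le> hi (Ps (Suc n)) - lo (Ps (Suc n)))"
proof -
  define R where "R = (\<lambda>P Q. pc Q \<and> lo Q \<le> c \<and> c \<le> hi Q \<and> lo P \<le> lo Q \<and> hi Q \<le> hi P \<and>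
     hi Q - lo Q \<le> hi P - lo P - g P \<and> \<tau> * g P \<le> hi Q - lo Q)"
  have ex: "\<exists>Q. R P Q" if H: "pc P" "lo P \<le> c" "c \<le> hi P" for P
  proof -
    obtain P1 P2 where Q: "pc P1" "pc P2" "lo P1 = lo P" "hi P2 = hi P" "lo P2 - hi P1 = g P"
        "\<tau> * g P \<le> hi P1 - lo P1" "\<tau> * g P \<le> hi P2 - lo P2"
        "\<forall>z. hi P1 < z \<and> z < lo P2 \<longrightarrow> z \<notin> K"
      using bsys_split[OF B H(1)] by blast
    have p1: "lo P1 < hi P1" "lo P2 < hi P2" "0 < g P" using bsys_piece[OF B] Q(1,2) H(1) by auto
    have "c \<le> hi P1 \<or> lo P2 \<le> c" using Q(8) c(1) by force
    then show ?thesis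
    proof
      assume "c \<le> hi P1" then have "R P P1" unfolding R_def using Q p1 H by auto
      then show ?thesis ..
    next
      assume "lo P2 \<le> c" then have "R P P2" unfolding R_def using Q p1 H by auto
      then show ?thesis ..
    qed
  qed
  define nx where "nx = (\<lambda>P. SOME Q. R P Q)"
  define Ps where "Ps = (\<lambda>n. (nx ^^ n) P0)"
  have PsS: "Ps (Suc n) = nx (Ps n)" for n by (simp add: Ps_def)
  have I: "pc (Ps n) \<and> lo (Ps n) \<le> c \<and> c \<le> hi (Ps n)" for n
  proof (induction n)
    case 0 then show ?case using P0 c by (simp add: Ps_def)
  next
    case (Suc n) then show ?case unfolding PsS nx_def using someI_ex[OF ex] R_def by blast
  qed
  have "R (Ps n) (Ps (Suc n))" for n unfolding PsS nx_def using someI_ex[OF ex] I by blast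
  then show ?thesis using I unfolding R_def by (intro exI[of _ Ps]) (auto simp: Ps_def)
qed

lemma bsys_shrink:
  assumes B: "bsys K pc lo hi g \<tau>"
    and H: "\<And>n. pc (Ps n) \<and> lo (Ps n) \<le> lo (Ps (Suc n)) \<and> hi (Ps (Suc n)) \<le> hi (Ps n) \<and>
     hi (Ps (Suc n)) - lo (Ps (Suc n)) \<le> hi (Ps n) - lo (Ps n) - g (Ps n)"
    and e: "\<epsilon> > 0"
  shows "\<exists>n. hi (Ps n) - lo (Ps n) < \<epsilon>"
proof (rule ccontr)
  assume "\<not> ?thesis"
  then have L: "\<And>n. \<epsilon> \<le> hi (Ps n) - lo (Ps n)" by (simp add: not_less)
  define l where "l = (\<lambda>n. lo (Ps n))"
  define h where "h = (\<lambda>n. hi (Ps n))"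
  have lm: "l m \<le> l n" if "m \<le> n" for m n using lift_Suc_mono_le[of l, OF _ that] H l_def by auto
  have hm: "h n \<le> h m" if "m \<le> n" for m n using lift_Suc_antimono_le[of h, OF _ that] H h_def by auto
  have a: "l m \<le> h n - \<epsilon>" for m n
    using lm[of m "max m n"] hm[of n "max m n"] L[of "max m n"] unfolding l_def h_def by simp
  have bdd: "bdd_above (range l)" using a[of _ 0] by (intro bdd_aboveI[of _ "h 0 - \<epsilon>"]) auto
  define A where "A = Sup (range l)"
  have A1: "l n \<le> A" for n unfolding A_def using bdd by (auto intro: cSup_upper)
  have A2: "A \<le> h n - \<epsilon>" for n unfolding A_def using a by (auto intro: cSup_least)
  obtain z where z: "A < z" "z < A + \<epsilon>" "z \<notin> K" using bsys_nonint[OF B, of A "A + \<epsilon>"] e by auto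
  obtain \<eta> where eta: "\<eta> > 0" "\<And>P. pc P \<and> lo P \<le> z \<and> z \<le> hi P \<Longrightarrow> \<eta> \<le> g P"
    using bsys_hole[OF B z(3)] by blast
  have gn: "\<eta> \<le> g (Ps n)" for n
    using eta(2)[of "Ps n"] H[of n] A1[of n] A2[of n] z unfolding l_def h_def by auto
  have "hi (Ps n) - lo (Ps n) \<le> hi (Ps 0) - lo (Ps 0) - real n * \<eta>" for n
  proof (induction n)
    case 0 then show ?case by simp
  next
    case (Suc n) then show ?case using H[of n] gn[of n] by (simp add: algebra_simps)
  qed
  moreover obtain n where "hi (Ps 0) - lo (Ps 0) < real n * \<eta>"
    using reals_Archimedean3[of \<eta>] eta(1) by auto
  ultimately show False using L[of n] e by (smt (verit))
qed

lemma bsys_small_piece: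
  assumes B: "bsys K pc lo hi g \<tau>" and P0: "pc P0" and c: "c \<in> K" "lo P0 \<le> c" "c \<le> hi P0"
    and e: "\<epsilon> > 0"
  shows "\<exists>P. pc P \<and> lo P \<le> c \<and> c \<le> hi P \<and> hi P - lo P < \<epsilon> \<and> lo P0 \<le> lo P \<and> hi P \<le> hi P0"
proof -
  obtain Ps where Ps: "Ps 0 = P0" "\<And>n. pc (Ps n) \<and> lo (Ps n) \<le> c \<and> c \<le> hi (Ps n) \<and>
     lo (Ps n) \<le> lo (Ps (Suc n)) \<and> hi (Ps (Suc n)) \<le> hi (Ps n) \<and>
     hi (Ps (Suc n)) - lo (Ps (Suc n)) \<le> hi (Ps n) - lo (Ps n) - g (Ps n) \<and>
     \<tau> * g (Ps n) \<le> hi (Ps (Suc n)) - lo (Ps (Suc n))"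
    using bsys_descend[OF B P0 c] by blast
  obtain n where n: "hi (Ps n) - lo (Ps n) < \<epsilon>" using bsys_shrink[OF B _ e, of Ps] Ps(2) by blast
  have "lo (Ps 0) \<le> lo (Ps n)" using lift_Suc_mono_le[of "\<lambda>n. lo (Ps n)" 0 n] Ps(2) by auto
  moreover have "hi (Ps n) \<le> hi (Ps 0)" using lift_Suc_antimono_le[of "\<lambda>n. hi (Ps n)" 0 n] Ps(2) by auto
  ultimately show ?thesis using n Ps by (intro exI[of _ "Ps n"]) auto
qed

lemma bsys_first:
  assumes B: "bsys K pc lo hi g \<tau>" and t: "0 \<le> \<tau>" and P0: "pc P0" and k: "0 < \<kappa>" "\<kappa> < g P0"
  shows "\<exists>Q. pc Q \<and> lo P0 \<le> lo Q \<and> hi Q \<le> hi P0 \<and> g Q \<le> \<kappa> \<and> \<tau> * \<kappa> \<le> hi Q - lo Q"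
proof -
  have c: "lo P0 \<in> K" "lo P0 \<le> lo P0" "lo P0 \<le> hi P0" using bsys_piece[OF B P0] by auto
  obtain Ps where Ps: "Ps 0 = P0" "\<And>n. pc (Ps n) \<and> lo (Ps n) \<le> lo P0 \<and> lo P0 \<le> hi (Ps n) \<and>
     lo (Ps n) \<le> lo (Ps (Suc n)) \<and> hi (Ps (Suc n)) \<le> hi (Ps n) \<and>
     hi (Ps (Suc n)) - lo (Ps (Suc n)) \<le> hi (Ps n) - lo (Ps n) - g (Ps n) \<and>
     \<tau> * g (Ps n) \<le> hi (Ps (Suc n)) - lo (Ps (Suc n))"
    using bsys_descend[OF B P0 c] by blast
  obtain n where n: "hi (Ps n) - lo (Ps n) < \<kappa>" using bsys_shrink[OF B _ k(1), of Ps] Ps(2) by blast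
  have gle: "g P \<le> hi P - lo P" if H: "pc P" for P
  proof -
    have "0 \<le> \<tau> * g P" using bsys_piece[OF B H] t by auto
    then show ?thesis using bsys_len[OF B t H] by (simp add: algebra_simps)
  qed
  have ex: "\<exists>n. g (Ps n) \<le> \<kappa>" using gle[of "Ps n"] n Ps(2) by (intro exI[of _ n]) auto
  define n0 where "n0 = (LEAST n. g (Ps n) \<le> \<kappa>)"
  have n0: "g (Ps n0) \<le> \<kappa>" unfolding n0_def using LeastI_ex[OF ex] .
  have "n0 \<noteq> 0"
  proof
    assume "n0 = 0" then show False using n0 Ps(1) k by auto
  qed
  then obtain k0 where k0: "n0 = Suc k0" by (cases n0) auto
  have "\<not> g (Ps k0) \<le> \<kappa>" using not_less_Least[of k0 "\<lambda>n. g (Ps n) \<le> \<kappa>"] k0 n0_def by auto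
  then have "\<tau> * \<kappa> \<le> \<tau> * g (Ps k0)" using t by (auto intro: mult_left_mono)
  also have "\<dots> \<le> hi (Ps n0) - lo (Ps n0)" using Ps(2)[of k0] k0 by auto
  finally have len: "\<tau> * \<kappa> \<le> hi (Ps n0) - lo (Ps n0)" .
  have "lo (Ps 0) \<le> lo (Ps n0)" using lift_Suc_mono_le[of "\<lambda>n. lo (Ps n)" 0 n0] Ps(2) by auto
  moreover have "hi (Ps n0) \<le> hi (Ps 0)" using lift_Suc_antimono_le[of "\<lambda>n. hi (Ps n)" 0 n0] Ps(2) by auto
  ultimately show ?thesis using n0 len Ps by (intro exI[of _ "Ps n0"]) auto
qed



definition gapI :: "real set \<Rightarrow> real \<Rightarrow> real \<Rightarrow> bool" where
  "gapI C l m \<longleftrightarrow> l < m \<and> l \<in> C \<and> m \<in> C \<and> (\<forall>z. l < z \<and> z < m \<longrightarrow> z \<notin> C)"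

lemma gapI_gap:
  assumes "gapI C l m"
  shows "gap C {l<..<m}"
proof -
  have lm: "l < m" "l \<in> C" "m \<in> C" "\<And>z. l < z \<Longrightarrow> z < m \<Longrightarrow> z \<notin> C" using assms gapI_def by auto
  have "{l<..<m} \<in> components (- C)"
    unfolding in_components_maximal
  proof (intro conjI allI impI)
    show "{l<..<m} \<noteq> {}" using lm by auto
    show "{l<..<m} \<subseteq> - C" using lm by auto
    show "connected {l<..<m}" by simp
    fix D assume D: "D \<noteq> {} \<and> {l<..<m} \<subseteq> D \<and> D \<subseteq> - C \<and> connected D"
    have "(l+m)/2 \<in> {l<..<m}" using lm by auto
    then have mid: "(l+m)/2 \<in> D" using D by blast
    have I: "\<forall>x\<in>D. \<forall>y\<in>D. \<forall>z. x \<le> z \<longrightarrow> z \<le> y \<longrightarrow> z \<in> D" using D connected_iff_interval by blast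
    show "D = {l<..<m}"
    proof
      show "D \<subseteq> {l<..<m}"
      proof
        fix d assume d: "d \<in> D"
        show "d \<in> {l<..<m}"
        proof (rule ccontr)
          assume "d \<notin> {l<..<m}"
          then have "d \<le> l \<or> m \<le> d" by auto
          then show False
          proof
            assume "d \<le> l"
            then have "l \<in> D" using I[rule_format, OF d mid, of l] lm by auto
            then show False using D lm by auto
          next
            assume "m \<le> d"
            then have "m \<in> D" using I[rule_format, OF mid d, of m] lm by auto
            then show False using D lm by auto
          qed
        qed
      qed
      show "{l<..<m} \<subseteq> D" using D by auto
    qed
  qed
  then show ?thesis unfolding gap_def by auto
qed

lemma gap_gapI:
  assumes cl: "closed C" and G: "gap C G"
  shows "\<exists>l m. gapI C l m \<and> G = {l<..<m}"
proof -
  have comp: "G \<in> components (- C)" and bd: "bounded G" using G gap_def by auto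
  have ne: "G \<noteq> {}" and sub: "G \<subseteq> - C" and con: "connected G"
    using in_components_nonempty[OF comp] in_components_subset[OF comp] in_components_connected[OF comp] by auto
  have bb: "bdd_below G" "bdd_above G" using bd bounded_imp_bdd_below bounded_imp_bdd_above by auto
  define l where "l = Inf G"
  define m where "m = Sup G"
  have lz: "l \<le> z" "z \<le> m" if "z \<in> G" for z using that bb cInf_lower cSup_upper l_def m_def by auto
  have opC: "open (- C)" using cl by auto
  have lC: "l \<in> C"
  proof (rule ccontr)
    assume "l \<notin> C"
    then obtain e where e: "e > 0" "ball l e \<subseteq> - C" using opC open_contains_ball by blast
    obtain g where g: "g \<in> G" "g < l + e" using cInf_lessD[of G "l + e"] ne e l_def by auto
    have "g \<in> ball l e" using g lz[OF g(1)] by (auto simp: dist_real_def)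
    then have "connected (G \<union> ball l e)" using con g by (intro connected_Un) auto
    then have "G \<union> ball l e \<subseteq> G" using components_maximal[OF comp, of "G \<union> ball l e"] e sub ne by auto
    then have "l - e/2 \<in> G" using e by (auto simp: dist_real_def)
    then show False using lz[of "l - e/2"] e by auto
  qed
  have mC: "m \<in> C"
  proof (rule ccontr)
    assume "m \<notin> C"
    then obtain e where e: "e > 0" "ball m e \<subseteq> - C" using opC open_contains_ball by blast
    obtain g where g: "g \<in> G" "m - e < g" using less_cSupD[of G "m - e"] ne e m_def by auto
    have "g \<in> ball m e" using g lz[OF g(1)] by (auto simp: dist_real_def)
    then have "connected (G \<union> ball m e)" using con g by (intro connected_Un) auto
    then have "G \<union> ball m e \<subseteq> G" using components_maximal[OF comp, of "G \<union> ball m e"] e sub ne by auto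
    then have "m + e/2 \<in> G" using e by (auto simp: dist_real_def)
    then show False using lz[of "m + e/2"] e by auto
  qed
  have Geq: "G = {l<..<m}"
  proof
    show "G \<subseteq> {l<..<m}"
    proof
      fix z assume z: "z \<in> G"
      then have "z \<noteq> l" "z \<noteq> m" using lC mC sub by auto
      then show "z \<in> {l<..<m}" using lz[OF z] by auto
    qed
    show "{l<..<m} \<subseteq> G"
    proof
      fix z assume z: "z \<in> {l<..<m}"
      obtain a where a: "a \<in> G" "a < z" using cInf_lessD[of G z] ne z l_def by auto
      obtain b where b: "b \<in> G" "z < b" using less_cSupD[of G z] ne z m_def by auto
      show "z \<in> G" using con a b unfolding connected_iff_interval by (meson less_eq_real_def)
    qed
  qed
  have "l < m" using ne Geq by auto
  moreover have "\<forall>z. l < z \<and> z < m \<longrightarrow> z \<notin> C" using Geq sub by auto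
  ultimately show ?thesis using lC mC Geq unfolding gapI_def by blast
qed

lemma gapI_facts:
  assumes "gapI C l m"
  shows "Inf {l<..<m} = l" "Sup {l<..<m} = m" "glen {l<..<m} = m - l"
  using assms unfolding gapI_def glen_def by auto

lemma gapI_disj:
  assumes "gapI C l m" "gapI C l' m'" "l < l'"
  shows "m \<le> l'"
  using assms unfolding gapI_def by (meson not_le)

lemma gapI_same:
  assumes "gapI C l m" "gapI C l m'"
  shows "m = m'"
  using assms unfolding gapI_def by (meson linorder_neqE_linordered_idom)



lemma BR_cases:
  assumes "compact C" "gapI C l m"
  shows "bridge_right C {l<..<m} =
    (if \<exists>G'. gap C G' \<and> m \<le> Inf G' \<and> m - l \<le> glen G'
     then Inf {Inf G' | G'. gap C G' \<and> m \<le> Inf G' \<and> m - l \<le> glen G'} - m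
     else Sup C - m)"
  unfolding bridge_right_def gapI_facts[OF assms(2)] by (rule refl)

lemma BL_cases:
  assumes "compact C" "gapI C l m"
  shows "bridge_left C {l<..<m} =
    (if \<exists>G'. gap C G' \<and> Sup G' \<le> l \<and> m - l \<le> glen G'
     then l - Sup {Sup G' | G'. gap C G' \<and> Sup G' \<le> l \<and> m - l \<le> glen G'}
     else l - Inf C)"
  unfolding bridge_left_def gapI_facts[OF assms(2)] by (rule refl)

lemma BR_le:
  assumes C: "compact C" and g: "gapI C l m" "gapI C l' m'" and h: "m \<le> l'" "m - l \<le> m' - l'"
  shows "bridge_right C {l<..<m} \<le> l' - m"
proof -
  define S where "S = {Inf G' | G'. gap C G' \<and> m \<le> Inf G' \<and> m - l \<le> glen G'}"
  have G': "gap C {l'<..<m'}" "Inf {l'<..<m'} = l'" "glen {l'<..<m'} = m' - l'"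
    using gapI_gap[OF g(2)] gapI_facts[OF g(2)] by auto
  have ex: "\<exists>G'. gap C G' \<and> m \<le> Inf G' \<and> m - l \<le> glen G'" using G' h by auto
  have "l' \<in> S" unfolding S_def using G' h by force
  moreover have "bdd_below S" unfolding S_def by (intro bdd_belowI[of _ m]) auto
  ultimately have "Inf S \<le> l'" by (rule cInf_lower)
  then show ?thesis using BR_cases[OF C g(1)] ex S_def by simp
qed

lemma BL_le:
  assumes C: "compact C" and g: "gapI C l m" "gapI C l' m'" and h: "m' \<le> l" "m - l \<le> m' - l'"
  shows "bridge_left C {l<..<m} \<le> l - m'"
proof -
  define S where "S = {Sup G' | G'. gap C G' \<and> Sup G' \<le> l \<and> m - l \<le> glen G'}"
  have G': "gap C {l'<..<m'}" "Sup {l'<..<m'} = m'" "glen {l'<..<m'} = m' - l'"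
    using gapI_gap[OF g(2)] gapI_facts[OF g(2)] by auto
  have ex: "\<exists>G'. gap C G' \<and> Sup G' \<le> l \<and> m - l \<le> glen G'" using G' h by auto
  have "m' \<in> S" unfolding S_def using G' h by force
  moreover have "bdd_above S" unfolding S_def by (intro bdd_aboveI[of _ l]) auto
  ultimately have "m' \<le> Sup S" by (rule cSup_upper)
  then show ?thesis using BL_cases[OF C g(1)] ex S_def by simp
qed

lemma BR_max:
  assumes C: "compact C" and g: "gapI C l m"
  shows "bridge_right C {l<..<m} \<le> Sup C - m"
proof (cases "\<exists>G'. gap C G' \<and> m \<le> Inf G' \<and> m - l \<le> glen G'")
  case True
  then obtain G' where G': "gap C G'" "m \<le> Inf G'" "m - l \<le> glen G'" by blast
  obtain l' m' where lm: "gapI C l' m'" "G' = {l'<..<m'}" using gap_gapI[OF compact_imp_closed[OF C] G'(1)] by blast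
  have "bridge_right C {l<..<m} \<le> l' - m"
    using BR_le[OF C g lm(1)] G' lm gapI_facts[OF lm(1)] by auto
  moreover have "l' \<le> Sup C"
    using lm(1) C unfolding gapI_def by (auto intro!: cSup_upper bounded_imp_bdd_above compact_imp_bounded)
  ultimately show ?thesis by simp
next
  case False then show ?thesis unfolding BR_cases[OF C g] if_not_P[OF False] by simp
qed

lemma BL_min:
  assumes C: "compact C" and g: "gapI C l m"
  shows "bridge_left C {l<..<m} \<le> l - Inf C"
proof (cases "\<exists>G'. gap C G' \<and> Sup G' \<le> l \<and> m - l \<le> glen G'")
  case True
  then obtain G' where G': "gap C G'" "Sup G' \<le> l" "m - l \<le> glen G'" by blast
  obtain l' m' where lm: "gapI C l' m'" "G' = {l'<..<m'}" using gap_gapI[OF compact_imp_closed[OF C] G'(1)] by blast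
  have "bridge_left C {l<..<m} \<le> l - m'"
    using BL_le[OF C g lm(1)] G' lm gapI_facts[OF lm(1)] by auto
  moreover have "Inf C \<le> m'"
    using lm(1) C unfolding gapI_def by (auto intro!: cInf_lower bounded_imp_bdd_below compact_imp_bounded)
  ultimately show ?thesis by simp
next
  case False then show ?thesis unfolding BL_cases[OF C g] if_not_P[OF False] by simp
qed

lemma BR_nonneg:
  assumes C: "compact C" and g: "gapI C l m"
  shows "0 \<le> bridge_right C {l<..<m}"
proof (cases "\<exists>G'. gap C G' \<and> m \<le> Inf G' \<and> m - l \<le> glen G'")
  case True
  define S where "S = {Inf G' | G'. gap C G' \<and> m \<le> Inf G' \<and> m - l \<le> glen G'}"
  have "S \<noteq> {}" using True S_def by auto
  then have "m \<le> Inf S" unfolding S_def by (rule cInf_greatest) auto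
  then show ?thesis using BR_cases[OF C g] True S_def by simp
next
  case False
  have "m \<le> Sup C"
    using g C unfolding gapI_def by (auto intro!: cSup_upper bounded_imp_bdd_above compact_imp_bounded)
  then show ?thesis unfolding BR_cases[OF C g] if_not_P[OF False] by simp
qed

lemma BL_nonneg:
  assumes C: "compact C" and g: "gapI C l m"
  shows "0 \<le> bridge_left C {l<..<m}"
proof (cases "\<exists>G'. gap C G' \<and> Sup G' \<le> l \<and> m - l \<le> glen G'")
  case True
  define S where "S = {Sup G' | G'. gap C G' \<and> Sup G' \<le> l \<and> m - l \<le> glen G'}"
  have "S \<noteq> {}" using True S_def by auto
  then have "Sup S \<le> l" unfolding S_def by (rule cSup_least) auto
  then show ?thesis using BL_cases[OF C g] True S_def by simp
next
  case False
  have "Inf C \<le> l"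
    using g C unfolding gapI_def by (auto intro!: cInf_lower bounded_imp_bdd_below compact_imp_bounded)
  then show ?thesis unfolding BL_cases[OF C g] if_not_P[OF False] by simp
qed

lemma thick_le:
  assumes C: "compact C" and g: "gapI C l m"
  shows "thickness C * (m - l) \<le> bridge_right C {l<..<m}"
    and "thickness C * (m - l) \<le> bridge_left C {l<..<m}"
proof -
  define S where "S = {bridge_right C G / glen G | G. gap C G} \<union> {bridge_left C G / glen G | G. gap C G}"
  have pos: "0 \<le> x" if "x \<in> S" for x
  proof -
    obtain G where G: "gap C G" "x = bridge_right C G / glen G \<or> x = bridge_left C G / glen G"
      using \<open>x \<in> S\<close> S_def by blast
    obtain l' m' where lm: "gapI C l' m'" "G = {l'<..<m'}" using gap_gapI[OF compact_imp_closed[OF C] G(1)] by blast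
    have "0 \<le> glen G" using lm gapI_facts[OF lm(1)] gapI_def by auto
    then show ?thesis using G BR_nonneg[OF C lm(1)] BL_nonneg[OF C lm(1)] lm by auto
  qed
  have bdd: "bdd_below S" using pos by (intro bdd_belowI[of _ 0]) auto
  have gl: "glen {l<..<m} = m - l" "m - l > 0" "gap C {l<..<m}" using gapI_facts[OF g] g gapI_def gapI_gap[OF g] by auto
  have T: "thickness C = Inf S" unfolding thickness_def S_def ..
  have "bridge_right C {l<..<m} / (m - l) \<in> S" unfolding S_def using gl by force
  then have "thickness C \<le> bridge_right C {l<..<m} / (m - l)" using T bdd by (simp add: cInf_lower)
  then show "thickness C * (m - l) \<le> bridge_right C {l<..<m}" using gl by (simp add: field_simps)
  have "bridge_left C {l<..<m} / (m - l) \<in> S" unfolding S_def using gl by force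
  then have "thickness C \<le> bridge_left C {l<..<m} / (m - l)" using T bdd by (simp add: cInf_lower)
  then show "thickness C * (m - l) \<le> bridge_left C {l<..<m}" using gl by (simp add: field_simps)
qed



lemma cantor_facts:
  assumes "cantor_set C"
  shows "C \<noteq> {}" "compact C" "closed C" "bounded C" "bdd_above C" "bdd_below C"
    "\<And>x. x \<in> C \<Longrightarrow> x islimpt C" "\<And>x. x \<in> C \<Longrightarrow> connected_component_set C x = {x}"
  using assms unfolding cantor_set_def
  by (auto intro: compact_imp_closed compact_imp_bounded bounded_imp_bdd_above bounded_imp_bdd_below)

lemma cantor_nonint:
  assumes "cantor_set C" "x < y"
  shows "\<exists>z. x < z \<and> z < y \<and> z \<notin> C"
proof (rule ccontr)
  assume "\<not> ?thesis"
  then have sub: "{x<..<y} \<subseteq> C" by auto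
  define c where "c = (x + y) / 2"
  have c: "c \<in> {x<..<y}" using assms c_def by auto
  then have "{x<..<y} \<subseteq> connected_component_set C c"
    using connected_component_maximal[OF c _ sub] by simp
  moreover have "c \<in> C" using c sub by auto
  ultimately have "{x<..<y} \<subseteq> {c}" using cantor_facts(8)[OF assms(1), of c] by auto
  moreover have "(x + c)/2 \<in> {x<..<y}" "(x + c)/2 \<noteq> c" using c by auto
  ultimately show False by blast
qed

lemma gap_around:
  assumes C: "cantor_set C" and z: "z \<notin> C" "a \<le> z" "z \<le> b" "a \<in> C" "b \<in> C"
  shows "\<exists>l m. gapI C l m \<and> a \<le> l \<and> l < z \<and> z < m \<and> m \<le> b"
proof -
  note F = cantor_facts[OF C]
  define l where "l = Sup (C \<inter> {..z})"
  define m where "m = Inf (C \<inter> {z..})"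
  have n1: "C \<inter> {..z} \<noteq> {}" "bdd_above (C \<inter> {..z})" using z by auto
  have n2: "C \<inter> {z..} \<noteq> {}" "bdd_below (C \<inter> {z..})" using z by auto
  have lC: "l \<in> C \<inter> {..z}" unfolding l_def using n1 F(3) by (intro closed_contains_Sup) auto
  have mC: "m \<in> C \<inter> {z..}" unfolding m_def using n2 F(3) by (intro closed_contains_Inf) auto
  have al: "a \<le> l" unfolding l_def using n1 z by (intro cSup_upper) auto
  have mb: "m \<le> b" unfolding m_def using n2 z by (intro cInf_lower) auto
  have lz: "l < z" using lC z by (cases "l = z") auto
  have zm: "z < m" using mC z by (cases "m = z") auto
  have "w \<notin> C" if "l < w" "w < m" for w
  proof
    assume w: "w \<in> C"
    show False
    proof (cases "w \<le> z")
      case True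
      then have "w \<le> l" unfolding l_def using n1 w by (intro cSup_upper) auto
      then show False using that by auto
    next
      case False
      then have "m \<le> w" unfolding m_def using n2 w by (intro cInf_lower) auto
      then show False using that by auto
    qed
  qed
  then have "gapI C l m" unfolding gapI_def using lC mC lz zm by auto
  then show ?thesis using al mb lz zm by blast
qed

lemma sep_finite:
  fixes S :: "real set"
  assumes "S \<subseteq> {a..b}" "\<eta> > 0" "\<And>x y. x \<in> S \<Longrightarrow> y \<in> S \<Longrightarrow> x \<noteq> y \<Longrightarrow> \<eta> \<le> \<bar>x - y\<bar>"
  shows "finite S"
proof (rule ccontr)
  assume "infinite S"
  then obtain x where "x \<in> {a..b}" "x islimpt S"
    using compact_eq_Bolzano_Weierstrass[of "{a..b}"] assms(1) by auto
  then obtain y1 where y1: "y1 \<in> S" "y1 \<noteq> x" "dist y1 x < \<eta>/2"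
    using islimpt_approachable assms(2) by (metis half_gt_zero)
  then have "dist y1 x > 0" by simp
  then obtain y2 where y2: "y2 \<in> S" "y2 \<noteq> x" "dist y2 x < dist y1 x"
    using islimpt_approachable \<open>x islimpt S\<close> by blast
  have "y1 \<noteq> y2" using y2 by auto
  then have "\<eta> \<le> \<bar>y1 - y2\<bar>" using assms(3) y1 y2 by auto
  moreover have "\<bar>y1 - y2\<bar> < \<eta>" using y1(3) y2(3) unfolding dist_real_def by arith
  ultimately show False by simp
qed

lemma largest_gap:
  assumes C: "cantor_set C" and ab: "a < b" "a \<in> C" "b \<in> C"
  shows "\<exists>l m. gapI C l m \<and> a \<le> l \<and> m \<le> b \<and>
           (\<forall>l' m'. gapI C l' m' \<and> a \<le> l' \<and> m' \<le> b \<longrightarrow> m' - l' \<le> m - l)"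
proof -
  obtain z where z: "a < z" "z < b" "z \<notin> C" using cantor_nonint[OF C ab(1)] by blast
  obtain l0 m0 where g0: "gapI C l0 m0" "a \<le> l0" "m0 \<le> b" using gap_around[OF C z(3) _ _ ab(2,3)] z by force
  define \<eta> where "\<eta> = m0 - l0"
  have eta: "\<eta> > 0" using g0 gapI_def \<eta>_def by auto
  define P where "P = {(l,m). gapI C l m \<and> a \<le> l \<and> m \<le> b \<and> \<eta> \<le> m - l}"
  have inj: "inj_on fst P" unfolding P_def inj_on_def using gapI_same by fastforce
  have "finite (fst ` P)"
  proof (rule sep_finite[of _ a b \<eta>])
    show "fst ` P \<subseteq> {a..b}" unfolding P_def using gapI_def by auto
    show "\<eta> > 0" by (rule eta)
    fix x y assume "x \<in> fst ` P" "y \<in> fst ` P" "x \<noteq> y"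
    then obtain mx my where "gapI C x mx" "\<eta> \<le> mx - x" "gapI C y my" "\<eta> \<le> my - y"
      unfolding P_def by auto
    then show "\<eta> \<le> \<bar>x - y\<bar>" using gapI_disj \<open>x \<noteq> y\<close>
      by (metis abs_minus_commute abs_of_nonneg diff_ge_0_iff_ge dual_order.trans
          linorder_neqE_linordered_idom diff_right_mono less_eq_real_def)
  qed
  then have fin: "finite P" using finite_imageD inj by blast
  have ne: "(l0, m0) \<in> P" unfolding P_def \<eta>_def using g0 by auto
  define f where "f = (\<lambda>p::real\<times>real. snd p - fst p)"
  have "Max (f ` P) \<in> f ` P" using fin ne by (intro Max_in) auto
  then obtain l m where lm: "(l,m) \<in> P" "f (l,m) = Max (f ` P)" by auto
  have mx: "f q \<le> f (l,m)" if "q \<in> P" for q using lm fin that by simp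
  show ?thesis
  proof (intro exI conjI allI impI)
    show "gapI C l m" "a \<le> l" "m \<le> b" using lm P_def by auto
    fix l' m' assume H: "gapI C l' m' \<and> a \<le> l' \<and> m' \<le> b"
    show "m' - l' \<le> m - l"
    proof (cases "\<eta> \<le> m' - l'")
      case True then have "(l',m') \<in> P" using H P_def by auto
      then show ?thesis using mx f_def by fastforce
    next
      case False then show ?thesis using lm P_def by auto
    qed
  qed
qed

definition Lg :: "real set \<Rightarrow> real \<Rightarrow> real \<Rightarrow> real" where
  "Lg C a b = Sup {m - l | l m. gapI C l m \<and> a \<le> l \<and> m \<le> b}"

lemma Lg_props:
  assumes C: "cantor_set C" and ab: "a < b" "a \<in> C" "b \<in> C"
  shows "\<exists>l m. gapI C l m \<and> a \<le> l \<and> m \<le> b \<and> Lg C a b = m - l"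
    and "\<And>l' m'. gapI C l' m' \<Longrightarrow> a \<le> l' \<Longrightarrow> m' \<le> b \<Longrightarrow> m' - l' \<le> Lg C a b"
proof -
  obtain l m where lm: "gapI C l m" "a \<le> l" "m \<le> b"
      "\<And>l' m'. gapI C l' m' \<and> a \<le> l' \<and> m' \<le> b \<Longrightarrow> m' - l' \<le> m - l"
    using largest_gap[OF assms] by blast
  define S where "S = {m - l | l m. gapI C l m \<and> a \<le> l \<and> m \<le> b}"
  have "m - l \<in> S" using lm S_def by auto
  moreover have "\<And>x. x \<in> S \<Longrightarrow> x \<le> m - l" using lm(4) S_def by auto
  moreover have "bdd_above S" using lm(4) S_def by (intro bdd_aboveI[of _ "m - l"]) auto
  ultimately have eq: "Lg C a b = m - l" unfolding Lg_def S_def[symmetric]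
    by (intro antisym cSup_least cSup_upper) auto
  then show "\<exists>l m. gapI C l m \<and> a \<le> l \<and> m \<le> b \<and> Lg C a b = m - l" using lm by blast
  fix l' m' assume "gapI C l' m'" "a \<le> l'" "m' \<le> b"
  then show "m' - l' \<le> Lg C a b" using lm(4) eq by auto
qed

definition adm :: "real set \<Rightarrow> real \<Rightarrow> real \<Rightarrow> bool" where
  "adm C a b \<longleftrightarrow> a \<in> C \<and> b \<in> C \<and> a < b \<and>
     (\<forall>l m. gapI C l m \<and> a \<le> l \<and> m \<le> b \<longrightarrow>
        bridge_left C {l<..<m} \<le> l - a \<and> bridge_right C {l<..<m} \<le> b - m)"

lemma adm_split:
  assumes C: "cantor_set C" and t: "thickness C > 0" and A: "adm C a b"
  shows "\<exists>l m. gapI C l m \<and> a < l \<and> m < b \<and> m - l = Lg C a b \<and> adm C a l \<and> adm C m b \<and>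
      thickness C * (m - l) \<le> l - a \<and> thickness C * (m - l) \<le> b - m \<and>
      Lg C a l \<le> Lg C a b \<and> Lg C m b \<le> Lg C a b"
proof -
  note F = cantor_facts[OF C]
  have ab: "a < b" "a \<in> C" "b \<in> C" and Ab: "\<And>l m. gapI C l m \<Longrightarrow> a \<le> l \<Longrightarrow> m \<le> b \<Longrightarrow>
        bridge_left C {l<..<m} \<le> l - a \<and> bridge_right C {l<..<m} \<le> b - m"
    using A unfolding adm_def by auto
  obtain l m where lm: "gapI C l m" "a \<le> l" "m \<le> b" "Lg C a b = m - l"
    using Lg_props(1)[OF C ab] by blast
  have lgb: "m' - l' \<le> m - l" if "gapI C l' m'" "a \<le> l'" "m' \<le> b" for l' m'
    using Lg_props(2)[OF C ab that] lm(4) by simp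
  have gp: "0 < m - l" "l \<in> C" "m \<in> C" using lm gapI_def by auto
  have r1: "thickness C * (m - l) \<le> l - a" using thick_le(2)[OF F(2) lm(1)] Ab[OF lm(1-3)] by simp
  have r2: "thickness C * (m - l) \<le> b - m" using thick_le(1)[OF F(2) lm(1)] Ab[OF lm(1-3)] by simp
  have pos: "0 < thickness C * (m - l)" using t gp by simp
  have al: "a < l" using r1 pos by simp
  have mb: "m < b" using r2 pos by simp
  have adm1: "adm C a l" unfolding adm_def
  proof (intro conjI allI impI)
    show "a \<in> C" "l \<in> C" "a < l" using ab gp al by auto
    fix l' m' assume H: "gapI C l' m' \<and> a \<le> l' \<and> m' \<le> l"
    have "m' \<le> b" using H lm gapI_def by auto
    then show "bridge_left C {l'<..<m'} \<le> l' - a" using Ab H by blast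
    show "bridge_right C {l'<..<m'} \<le> l - m'"
      using BR_le[OF F(2) _ lm(1)] H lgb[of l' m'] \<open>m' \<le> b\<close> by auto
  qed
  have adm2: "adm C m b" unfolding adm_def
  proof (intro conjI allI impI)
    show "m \<in> C" "b \<in> C" "m < b" using ab gp mb by auto
    fix l' m' assume H: "gapI C l' m' \<and> m \<le> l' \<and> m' \<le> b"
    have "a \<le> l'" using H lm gapI_def by auto
    then show "bridge_right C {l'<..<m'} \<le> b - m'" using Ab H by blast
    show "bridge_left C {l'<..<m'} \<le> l' - m"
      using BL_le[OF F(2) _ lm(1)] H lgb[of l' m'] \<open>a \<le> l'\<close> by auto
  qed
  have lg1: "Lg C a l \<le> Lg C a b"
  proof -
    obtain l1 m1 where "gapI C l1 m1" "a \<le> l1" "m1 \<le> l" "Lg C a l = m1 - l1"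
      using Lg_props(1)[OF C al ab(2) gp(2)] by blast
    moreover have "l \<le> b" using lm gp by auto
    ultimately show ?thesis using Lg_props(2)[OF C ab, of l1 m1] by auto
  qed
  have lg2: "Lg C m b \<le> Lg C a b"
  proof -
    obtain l1 m1 where "gapI C l1 m1" "m \<le> l1" "m1 \<le> b" "Lg C m b = m1 - l1"
      using Lg_props(1)[OF C mb gp(3) ab(3)] by blast
    moreover have "a \<le> m" using lm gp by auto
    ultimately show ?thesis using Lg_props(2)[OF C ab, of l1 m1] by auto
  qed
  show ?thesis using lm(1) al mb lm(4) adm1 adm2 r1 r2 lg1 lg2 by auto
qed

lemma adm_init:
  assumes C: "cantor_set C"
  shows "Inf C < Sup C" "adm C (Inf C) (Sup C)"
proof -
  note F = cantor_facts[OF C]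
  obtain x where x: "x \<in> C" using F(1) by auto
  obtain y where y: "y \<in> C" "y \<noteq> x" using F(7)[OF x] islimpt_approachable zero_less_one by blast
  have iC: "Inf C \<in> C" "Sup C \<in> C" using F by (auto intro: closed_contains_Inf closed_contains_Sup)
  have "Inf C \<le> x" "Inf C \<le> y" "x \<le> Sup C" "y \<le> Sup C" using x y F by (auto intro: cInf_lower cSup_upper)
  then show lt: "Inf C < Sup C" using y by auto
  show "adm C (Inf C) (Sup C)" unfolding adm_def
    using iC lt BL_min[OF F(2)] BR_max[OF F(2)] by auto
qed

lemma bsys_C:
  assumes C: "cantor_set C" and t: "thickness C > 0"
  shows "bsys C (\<lambda>P. adm C (fst P) (snd P)) fst snd (\<lambda>P. Lg C (fst P) (snd P)) (thickness C)"
proof (rule bsysI)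
  fix P :: "real \<times> real" assume A: "adm C (fst P) (snd P)"
  obtain a b where P: "P = (a,b)" by force
  have ab: "a \<in> C" "b \<in> C" "a < b" using A P adm_def by auto
  obtain l m where lm: "gapI C l m" "a < l" "m < b" "m - l = Lg C a b" "adm C a l" "adm C m b"
      "thickness C * (m - l) \<le> l - a" "thickness C * (m - l) \<le> b - m"
      "Lg C a l \<le> Lg C a b" "Lg C m b \<le> Lg C a b"
    using adm_split[OF C t, of a b] A P by auto
  show "fst P \<in> C \<and> snd P \<in> C \<and> fst P < snd P \<and> 0 < Lg C (fst P) (snd P)"
    using ab P lm gapI_def by auto
  show "\<exists>P1 P2. adm C (fst P1) (snd P1) \<and> adm C (fst P2) (snd P2) \<and> fst P1 = fst P \<and> snd P2 = snd P \<and>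
      fst P2 - snd P1 = Lg C (fst P) (snd P) \<and>
      thickness C * Lg C (fst P) (snd P) \<le> snd P1 - fst P1 \<and>
      thickness C * Lg C (fst P) (snd P) \<le> snd P2 - fst P2 \<and>
      Lg C (fst P1) (snd P1) \<le> Lg C (fst P) (snd P) \<and> Lg C (fst P2) (snd P2) \<le> Lg C (fst P) (snd P) \<and>
      (\<forall>z. snd P1 < z \<and> z < fst P2 \<longrightarrow> z \<notin> C)"
    apply (rule exI[of _ "(a,l)"], rule exI[of _ "(m,b)"])
    using lm P unfolding gapI_def by auto
next
  fix z assume z: "z \<notin> C"
  show "\<exists>\<eta>>0. \<forall>P. adm C (fst P) (snd P) \<and> fst P \<le> z \<and> z \<le> snd P \<longrightarrow> \<eta> \<le> Lg C (fst P) (snd P)"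
  proof (cases "\<exists>P. adm C (fst P) (snd P) \<and> fst P \<le> z \<and> z \<le> snd P")
    case False then show ?thesis by (intro exI[of _ 1]) auto
  next
    case True
    then obtain a0 b0 where "adm C a0 b0" "a0 \<le> z" "z \<le> b0" by auto
    then obtain l m where lm: "gapI C l m" "l < z" "z < m"
      using gap_around[OF C z] adm_def by blast
    have "m - l \<le> Lg C (fst P) (snd P)" if H: "adm C (fst P) (snd P) \<and> fst P \<le> z \<and> z \<le> snd P" for P
    proof -
      obtain l' m' where lm': "gapI C l' m'" "fst P \<le> l'" "l' < z" "z < m'" "m' \<le> snd P"
        using gap_around[OF C z] H adm_def by blast
      have "l = l'"
      proof (rule ccontr)
        assume "l \<noteq> l'"
        then have "l < l' \<or> l' < l" by auto
        then show False
        proof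
          assume "l < l'" then show False using lm lm' unfolding gapI_def by auto
        next
          assume "l' < l" then show False using lm lm' unfolding gapI_def by auto
        qed
      qed
      then have "m = m'" using gapI_same lm lm' by blast
      then show ?thesis using Lg_props(2)[OF C, of "fst P" "snd P" l' m'] lm' H \<open>l = l'\<close> adm_def by auto
    qed
    then show ?thesis using lm gapI_def by (intro exI[of _ "m - l"]) auto
  qed
next
  fix x y :: real assume "x < y"
  then show "\<exists>z. x < z \<and> z < y \<and> z \<notin> C" using cantor_nonint[OF C] by blast
qed



lemma h_cont:
  fixes \<alpha> u0 \<theta> :: real
  assumes "u0 > 0" "\<theta> > 0"
  shows "\<exists>d>0. \<forall>\<beta> u. \<bar>\<beta> - \<alpha>\<bar> < d \<and> \<bar>u - u0\<bar> < d \<longrightarrow>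
           \<bar>\<beta> * u powr (\<beta> - 1) - \<alpha> * u0 powr (\<alpha> - 1)\<bar> < \<theta>"
proof -
  have "continuous (at (\<alpha>, u0)) (\<lambda>p::real\<times>real. fst p * snd p powr (fst p - 1))"
    using assms by (intro continuous_intros) auto
  then obtain e where e: "e > 0" "\<And>p. dist p (\<alpha>, u0) < e \<Longrightarrow>
      dist (fst p * snd p powr (fst p - 1)) (\<alpha> * u0 powr (\<alpha> - 1)) < \<theta>"
    unfolding continuous_at_eps_delta using assms(2) by fastforce
  show ?thesis
  proof (intro exI[of _ "e/2"] conjI allI impI)
    show "e/2 > 0" using e by simp
    fix \<beta> u assume H: "\<bar>\<beta> - \<alpha>\<bar> < e/2 \<and> \<bar>u - u0\<bar> < e/2"
    have "dist (\<beta>, u) (\<alpha>, u0) < e" unfolding dist_Pair_Pair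
      using H by (intro sqrt_sum_squares_half_less) (auto simp: dist_real_def)
    then show "\<bar>\<beta> * u powr (\<beta> - 1) - \<alpha> * u0 powr (\<alpha> - 1)\<bar> < \<theta>"
      using e(2)[of "(\<beta>, u)"] by (simp add: dist_real_def)
  qed
qed

lemma N_cont:
  fixes \<alpha> a b e :: real
  assumes "a > 0" "b > 0" "\<alpha> > 0" "e > 0"
  shows "\<exists>d>0. \<forall>\<beta>. \<bar>\<beta> - \<alpha>\<bar> < d \<longrightarrow>
     \<bar>(a powr \<beta> + b powr \<beta>) powr (1/\<beta>) - (a powr \<alpha> + b powr \<alpha>) powr (1/\<alpha>)\<bar> < e"
proof -
  have "continuous (at \<alpha>) (\<lambda>\<beta>::real. (a powr \<beta> + b powr \<beta>) powr (1/\<beta>))"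
    using assms by (intro continuous_intros) (auto intro: add_pos_pos)
  then obtain d where "d > 0" "\<And>\<beta>. dist \<beta> \<alpha> < d \<Longrightarrow>
      dist ((a powr \<beta> + b powr \<beta>) powr (1/\<beta>)) ((a powr \<alpha> + b powr \<alpha>) powr (1/\<alpha>)) < e"
    unfolding continuous_at_eps_delta using assms(4) by blast
  then show ?thesis by (intro exI[of _ d]) (auto simp: dist_real_def)
qed

lemma powr_MVT:
  fixes x y \<beta> :: real
  assumes "0 < x" "x < y"
  shows "\<exists>\<xi>. x < \<xi> \<and> \<xi> < y \<and> y powr \<beta> - x powr \<beta> = (y - x) * (\<beta> * \<xi> powr (\<beta> - 1))"
proof -
  have "\<And>z. x \<le> z \<Longrightarrow> z \<le> y \<Longrightarrow> ((\<lambda>z. z powr \<beta>) has_real_derivative \<beta> * z powr (\<beta> - 1)) (at z)"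
    using assms by (auto intro!: has_real_derivative_powr)
  from MVT2[OF assms(2) this] show ?thesis by auto
qed



lemma dist_sys:
  assumes C: "cantor_set C" "thickness C > 0" and p: "p \<in> C" "p \<noteq> t0"
  shows "\<exists>E (pc::real\<times>real\<Rightarrow>bool) lo hi g. bsys E pc lo hi g (thickness C) \<and> \<bar>p - t0\<bar> \<in> E \<and>
     (\<exists>P. pc P \<and> lo P \<le> \<bar>p - t0\<bar> \<and> \<bar>p - t0\<bar> \<le> hi P) \<and> (\<forall>u\<in>E. \<exists>x\<in>C. \<bar>u\<bar> = \<bar>x - t0\<bar>)"
proof -
  note B = bsys_C[OF C]
  note F = cantor_facts[OF C(1)]
  have A0: "adm C (Inf C) (Sup C)" using adm_init[OF C(1)] by simp
  have pr: "Inf C \<le> p" "p \<le> Sup C" using p F by (auto intro: cInf_lower cSup_upper)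
  note BT = bsys_translate[OF B, of "- t0"]
  show ?thesis
  proof (cases "t0 < p")
    case True
    show ?thesis
      apply (rule exI[of _ "(\<lambda>x. x + - t0) ` C"], rule exI, rule exI, rule exI, rule exI)
      apply (rule conjI[OF BT])
      using True p pr A0 by (auto intro!: exI[of _ "(Inf C, Sup C)"])
  next
    case False
    then have lt: "p < t0" using p by auto
    note BR = bsys_reflect[OF BT]
    show ?thesis
      apply (rule exI[of _ "uminus ` (\<lambda>x. x + - t0) ` C"], rule exI, rule exI, rule exI, rule exI)
      apply (rule conjI[OF BR])
      using lt p pr A0 by (auto intro!: exI[of _ "(Inf C, Sup C)"] simp: image_iff)
  qed
qed

lemma lip_lemma:
  fixes \<alpha> \<beta> u0 h0 \<theta> d \<epsilon> x y :: real
  assumes H: "\<forall>\<beta> u. \<bar>\<beta> - \<alpha>\<bar> < d \<and> \<bar>u - u0\<bar> < d \<longrightarrow> \<bar>\<beta> * u powr (\<beta> - 1) - h0\<bar> < \<theta> * h0"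
    and b: "\<bar>\<beta> - \<alpha>\<bar> < d" and e: "0 < u0 - \<epsilon>" "\<epsilon> < d"
    and xy: "u0 - \<epsilon> \<le> x" "x < y" "y \<le> u0 + \<epsilon>"
  shows "h0 * (1 - \<theta>) * (y - x) \<le> y powr \<beta> - x powr \<beta> \<and> y powr \<beta> - x powr \<beta> \<le> h0 * (1 + \<theta>) * (y - x)"
proof -
  obtain \<xi> where \<xi>: "x < \<xi>" "\<xi> < y" "y powr \<beta> - x powr \<beta> = (y - x) * (\<beta> * \<xi> powr (\<beta> - 1))"
    using powr_MVT[of x y \<beta>] xy e by auto
  have "\<bar>\<xi> - u0\<bar> < d" using \<xi> xy e by auto
  then have "\<bar>\<beta> * \<xi> powr (\<beta> - 1) - h0\<bar> < \<theta> * h0" using H b by blast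
  then have "h0 * (1 - \<theta>) \<le> \<beta> * \<xi> powr (\<beta> - 1)" "\<beta> * \<xi> powr (\<beta> - 1) \<le> h0 * (1 + \<theta>)"
    by (auto simp: algebra_simps)
  moreover have "0 < y - x" using xy by simp
  ultimately show ?thesis using \<xi>(3)
    by (auto intro: mult_left_mono simp: mult.commute)
qed



lemma two_points:
  assumes C: "cantor_set C"
  shows "\<exists>c\<in>C. c \<noteq> t0"
  using adm_init[OF C] cantor_facts[OF C] closed_contains_Inf closed_contains_Sup
  by (metis less_irrefl)

lemma core:
  fixes C :: "real set" and \<alpha> t1 t2 :: real
  assumes C: "cantor_set C" and tau: "thickness C > 1" and al: "\<alpha> > 1"
  shows "\<exists>\<delta>>0. \<delta> < \<alpha> \<and> (\<exists>r1 r2. r1 < r2 \<and>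
           (\<forall>\<beta>. \<bar>\<beta> - \<alpha>\<bar> < \<delta> \<longrightarrow> (\<forall>r. r1 < r \<and> r < r2 \<longrightarrow> r \<in> pinned_dist \<beta> (t1,t2) C)))"
proof -
  define \<tau> where "\<tau> = thickness C"
  have t1': "\<tau> > 1" "thickness C > 0" using tau \<tau>_def by auto
  define \<theta> where "\<theta> = (\<tau> - 1) / (\<tau> + 1)"
  have th: "0 < \<theta>" "\<theta> < 1" unfolding \<theta>_def using t1' by (auto simp: divide_less_eq)
  have thk: "1 + \<theta> = \<tau> * (1 - \<theta>)" using t1' unfolding \<theta>_def by (simp add: field_simps)
  obtain c1 where c1: "c1 \<in> C" "c1 \<noteq> t1" using two_points[OF C] by blast
  obtain c2 where c2: "c2 \<in> C" "c2 \<noteq> t2" using two_points[OF C] by blast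
  obtain E1 and pc1 :: "real\<times>real \<Rightarrow> bool" and lo1 hi1 g1 where
    E1: "bsys E1 pc1 lo1 hi1 g1 \<tau>" "\<bar>c1 - t1\<bar> \<in> E1"
        "\<exists>P. pc1 P \<and> lo1 P \<le> \<bar>c1 - t1\<bar> \<and> \<bar>c1 - t1\<bar> \<le> hi1 P" "\<forall>u\<in>E1. \<exists>x\<in>C. \<bar>u\<bar> = \<bar>x - t1\<bar>"
    using dist_sys[OF C t1'(2) c1] \<tau>_def by blast
  obtain E2 and pc2 :: "real\<times>real \<Rightarrow> bool" and lo2 hi2 g2 where
    E2: "bsys E2 pc2 lo2 hi2 g2 \<tau>" "\<bar>c2 - t2\<bar> \<in> E2"
        "\<exists>P. pc2 P \<and> lo2 P \<le> \<bar>c2 - t2\<bar> \<and> \<bar>c2 - t2\<bar> \<le> hi2 P" "\<forall>u\<in>E2. \<exists>x\<in>C. \<bar>u\<bar> = \<bar>x - t2\<bar>"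
    using dist_sys[OF C t1'(2) c2] \<tau>_def by blast
  define u0 where "u0 = \<bar>c1 - t1\<bar>"
  define v0 where "v0 = \<bar>c2 - t2\<bar>"
  have uv0: "u0 > 0" "v0 > 0" using c1 c2 u0_def v0_def by auto
  define h1 where "h1 = \<alpha> * u0 powr (\<alpha> - 1)"
  define h2 where "h2 = \<alpha> * v0 powr (\<alpha> - 1)"
  have hpos: "h1 > 0" "h2 > 0" using al uv0 h1_def h2_def by auto
  obtain d1 where d1: "d1 > 0" "\<forall>\<beta> u. \<bar>\<beta> - \<alpha>\<bar> < d1 \<and> \<bar>u - u0\<bar> < d1 \<longrightarrow> \<bar>\<beta> * u powr (\<beta> - 1) - h1\<bar> < \<theta> * h1"
    using h_cont[OF uv0(1), of "\<theta> * h1" \<alpha>] th hpos h1_def by auto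
  obtain d2 where d2: "d2 > 0" "\<forall>\<beta> u. \<bar>\<beta> - \<alpha>\<bar> < d2 \<and> \<bar>u - v0\<bar> < d2 \<longrightarrow> \<bar>\<beta> * u powr (\<beta> - 1) - h2\<bar> < \<theta> * h2"
    using h_cont[OF uv0(2), of "\<theta> * h2" \<alpha>] th hpos h2_def by auto
  define \<epsilon> where "\<epsilon> = min (min d1 d2) (min u0 v0) / 2"
  have ep: "0 < \<epsilon>" "\<epsilon> < d1" "\<epsilon> < d2" "0 < u0 - \<epsilon>" "0 < v0 - \<epsilon>"
    using d1 d2 uv0 unfolding \<epsilon>_def by auto
  define m1 where "m1 = h1 * (1 - \<theta>)"
  define M1 where "M1 = h1 * (1 + \<theta>)"
  define m2 where "m2 = h2 * (1 - \<theta>)"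
  define M2 where "M2 = h2 * (1 + \<theta>)"
  have eq1: "M1 = \<tau> * m1" "M2 = \<tau> * m2" unfolding m1_def M1_def m2_def M2_def thk by simp_all
  have mM: "0 < m1" "m1 \<le> M1" "M1 = \<tau> * m1" "0 < m2" "m2 \<le> M2" "M2 = \<tau> * m2"
    using hpos th eq1 t1' unfolding m1_def M1_def m2_def M2_def by auto
  have DD: "M1 / m1 = \<tau>" "M2 / m2 = \<tau>" using mM by auto
  obtain P1 where P1: "pc1 P1" "lo1 P1 \<le> u0" "u0 \<le> hi1 P1" using E1(3) u0_def by blast
  obtain P2 where P2: "pc2 P2" "lo2 P2 \<le> v0" "v0 \<le> hi2 P2" using E2(3) v0_def by blast
  obtain J00 where J00: "pc2 J00" "lo2 J00 \<le> v0" "v0 \<le> hi2 J00" "hi2 J00 - lo2 J00 < \<epsilon>"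
    using bsys_small_piece[OF E2(1) P2(1) _ P2(2,3) ep(1)] E2(2) v0_def by blast
  have gJ00: "0 < g2 J00" using bsys_piece[OF E2(1) J00(1)] by simp
  define \<epsilon>' where "\<epsilon>' = min \<epsilon> (M2 * g2 J00 / m1)"
  have ep': "0 < \<epsilon>'" using ep gJ00 mM \<epsilon>'_def by auto
  obtain I0 where I0: "pc1 I0" "lo1 I0 \<le> u0" "u0 \<le> hi1 I0" "hi1 I0 - lo1 I0 < \<epsilon>'"
    using bsys_small_piece[OF E1(1) P1(1) _ P1(2,3) ep'] E1(2) u0_def by blast
  define a0 where "a0 = lo1 I0"
  define a1 where "a1 = hi1 I0"
  have a01: "a0 < a1" "0 < g1 I0" using bsys_piece[OF E1(1) I0(1)] a0_def a1_def by auto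
  define \<kappa> where "\<kappa> = m1 * (a1 - a0) / M2"
  have kap: "0 < \<kappa>" "\<kappa> < g2 J00"
  proof -
    show "0 < \<kappa>" using mM a01 \<kappa>_def by auto
    have "a1 - a0 < M2 * g2 J00 / m1" using I0(4) a0_def a1_def \<epsilon>'_def by auto
    then have "m1 * (a1 - a0) < M2 * g2 J00" using mM by (simp add: field_simps)
    moreover have M2p: "0 < M2" using mM by simp
    ultimately have "\<kappa> < (M2 * g2 J00) / M2" unfolding \<kappa>_def by (rule divide_strict_right_mono)
    then show "\<kappa> < g2 J00" using M2p by simp
  qed
  have tau0: "0 \<le> \<tau>" using t1' by simp
  obtain J where J: "pc2 J" "lo2 J00 \<le> lo2 J" "hi2 J \<le> hi2 J00" "g2 J \<le> \<kappa>" "\<tau> * \<kappa> \<le> hi2 J - lo2 J"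
    using bsys_first[OF E2(1) tau0 J00(1) kap] by blast
  define b0 where "b0 = lo2 J"
  define b1 where "b1 = hi2 J"
  have b01: "b0 < b1" using bsys_piece[OF E2(1) J(1)] b0_def b1_def by auto
  have reg1: "u0 - \<epsilon> < a0" "a1 < u0 + \<epsilon>" using I0 a0_def a1_def \<epsilon>'_def by auto
  have reg2: "v0 - \<epsilon> < b0" "b1 < v0 + \<epsilon>" using J J00 b0_def b1_def by auto
  have apos: "0 < a0" "0 < b0" using reg1 reg2 ep by auto
  have lenI: "(2*\<tau>+1) * g1 I0 \<le> a1 - a0" using bsys_len[OF E1(1) tau0 I0(1)] a0_def a1_def by simp
  have condA: "M2 * g2 J \<le> m1 * (a1 - a0)"
  proof -
    have "M2 * g2 J \<le> M2 * \<kappa>" using J(4) mM by (auto intro: mult_left_mono)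
    also have "\<dots> = m1 * (a1 - a0)" using mM \<kappa>_def by simp
    finally show ?thesis .
  qed
  have condB: "M1 * g1 I0 \<le> m2 * (b1 - b0)"
  proof -
    have "M1 * g1 I0 = m1 * (\<tau> * g1 I0)" using mM by simp
    also have "\<dots> \<le> m1 * (a1 - a0)" using lenI a01 mM tau0
      by (intro mult_left_mono) (auto simp: algebra_simps)
    also have "\<dots> = m2 * (\<tau> * \<kappa>)" using mM \<kappa>_def by (simp add: field_simps)
    also have "\<dots> \<le> m2 * (b1 - b0)" using J(5) mM b0_def b1_def by (auto intro: mult_left_mono)
    finally show ?thesis .
  qed
  define N where "N = (\<lambda>\<beta> a b. (a powr \<beta> + b powr \<beta>) powr (1/\<beta>) :: real)"
  have al0: "\<alpha> > 0" using al by simp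
  have rho: "N \<alpha> a0 b0 < N \<alpha> a1 b1"
  proof -
    have "a0 powr \<alpha> < a1 powr \<alpha>" "b0 powr \<alpha> < b1 powr \<alpha>"
      using apos a01 b01 al0 by (auto intro: powr_less_mono2)
    then have "a0 powr \<alpha> + b0 powr \<alpha> < a1 powr \<alpha> + b1 powr \<alpha>" by simp
    then show ?thesis unfolding N_def using al0 by (intro powr_less_mono2) auto
  qed
  define dd where "dd = (N \<alpha> a1 b1 - N \<alpha> a0 b0) / 3"
  have ddp: "dd > 0" using rho dd_def by simp
  obtain d3 where d3: "d3 > 0" "\<forall>\<beta>. \<bar>\<beta> - \<alpha>\<bar> < d3 \<longrightarrow> \<bar>N \<beta> a0 b0 - N \<alpha> a0 b0\<bar> < dd"
    using N_cont[OF apos(1) apos(2) al0 ddp] N_def by auto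
  have a1p: "0 < a1" "0 < b1" using apos a01 b01 by auto
  obtain d4 where d4: "d4 > 0" "\<forall>\<beta>. \<bar>\<beta> - \<alpha>\<bar> < d4 \<longrightarrow> \<bar>N \<beta> a1 b1 - N \<alpha> a1 b1\<bar> < dd"
    using N_cont[OF a1p(1) a1p(2) al0 ddp] N_def by auto
  define \<delta> where "\<delta> = min (min (min d1 d2) (min d3 d4)) (\<alpha>/2)"
  have dl: "\<delta> > 0" "\<delta> < \<alpha>" using d1 d2 d3 d4 al0 \<delta>_def by auto
  define r1 where "r1 = N \<alpha> a0 b0 + dd"
  define r2 where "r2 = N \<alpha> a1 b1 - dd"
  have r12: "r1 < r2" using ddp dd_def r1_def r2_def by simp
  have main: "r \<in> pinned_dist \<beta> (t1,t2) C" if bH: "\<bar>\<beta> - \<alpha>\<bar> < \<delta>" and rH: "r1 < r" "r < r2" for \<beta> r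
  proof -
    have "\<bar>\<beta> - \<alpha>\<bar> < \<alpha>/2" using bH \<delta>_def by auto
    then have bpos: "\<beta> > 0" by arith
    have Nb: "N \<beta> a0 b0 < r" "r < N \<beta> a1 b1"
      using d3(2)[rule_format, of \<beta>] d4(2)[rule_format, of \<beta>] bH \<delta>_def rH r1_def r2_def by auto
    have "0 < a0 powr \<alpha> + b0 powr \<alpha>" using apos by (intro add_pos_pos) auto
    then have Npos: "0 < N \<alpha> a0 b0" unfolding N_def by simp
    have rpos: "r > 0" using rH r1_def Npos ddp by simp
    define s where "s = r powr \<beta>"
    have Ninv: "(N \<beta> a b) powr \<beta> = a powr \<beta> + b powr \<beta>" if "0 < a" "0 < b" for a b
    proof -
      have "0 < a powr \<beta> + b powr \<beta>" using that by (intro add_pos_pos) auto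
      then show ?thesis unfolding N_def using bpos by (simp add: powr_powr)
    qed
    have s1: "a0 powr \<beta> + b0 powr \<beta> \<le> s"
      using Ninv[OF apos] powr_mono2[of \<beta> "N \<beta> a0 b0" r] Nb bpos s_def unfolding N_def by auto
    have s2: "s \<le> a1 powr \<beta> + b1 powr \<beta>"
      using Ninv[OF a1p] powr_mono2[of \<beta> r "N \<beta> a1 b1"] Nb bpos s_def rpos by auto
    define \<psi> where "\<psi> = (\<lambda>u::real. u powr \<beta>)"
    have b1': "\<bar>\<beta> - \<alpha>\<bar> < d1" "\<bar>\<beta> - \<alpha>\<bar> < d2" using bH \<delta>_def by auto
    have lip1: "m1*(y-x) \<le> \<psi> y - \<psi> x \<and> \<psi> y - \<psi> x \<le> M1*(y-x)"
      if "u0 - \<epsilon> \<le> x" "x < y" "y \<le> u0 + \<epsilon>" for x y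
      using lip_lemma[OF d1(2) b1'(1) ep(4) ep(2) that] m1_def M1_def \<psi>_def by (simp add: mult.assoc)
    have lip2: "m2*(y-x) \<le> \<psi> y - \<psi> x \<and> \<psi> y - \<psi> x \<le> M2*(y-x)"
      if "v0 - \<epsilon> \<le> x" "x < y" "y \<le> v0 + \<epsilon>" for x y
      using lip_lemma[OF d2(2) b1'(2) ep(5) ep(3) that] m2_def M2_def \<psi>_def by (simp add: mult.assoc)
    have cont1: "continuous_on {u0 - \<epsilon>..u0 + \<epsilon>} \<psi>" unfolding \<psi>_def using ep
      by (intro continuous_intros) auto
    have cont2: "continuous_on {v0 - \<epsilon>..v0 + \<epsilon>} \<psi>" unfolding \<psi>_def using ep
      by (intro continuous_intros) auto
    note S1 = bsys_image[OF E1(1) mM(1) mM(2) _ cont1 lip1]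
    note S2 = sys_translate[OF sys_reflect[OF bsys_image[OF E2(1) mM(4) mM(5) _ cont2 lip2]], of s]
    have S1': "sys (\<psi> ` (E1 \<inter> {u0 - \<epsilon>..u0 + \<epsilon>})) (\<lambda>P. pc1 P \<and> u0 - \<epsilon> \<le> lo1 P \<and> hi1 P \<le> u0 + \<epsilon>)
       (\<lambda>P. \<psi> (lo1 P)) (\<lambda>P. \<psi> (hi1 P)) (\<lambda>P. M1 * g1 P) \<tau>"
      using S1 mM DD by simp
    have S2': "sys ((\<lambda>x. x + s) ` uminus ` \<psi> ` (E2 \<inter> {v0 - \<epsilon>..v0 + \<epsilon>}))
       (\<lambda>P. pc2 P \<and> v0 - \<epsilon> \<le> lo2 P \<and> hi2 P \<le> v0 + \<epsilon>)
       (\<lambda>P. - \<psi> (hi2 P) + s) (\<lambda>P. - \<psi> (lo2 P) + s) (\<lambda>P. M2 * g2 P) \<tau>"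
      using S2 mM DD by simp
    have lA: "m1 * (a1 - a0) \<le> \<psi> a1 - \<psi> a0" using lip1[of a0 a1] reg1 a01 by auto
    have lB: "m2 * (b1 - b0) \<le> \<psi> b1 - \<psi> b0" using lip2[of b0 b1] reg2 b01 by auto
    obtain z where z: "z \<in> \<psi> ` (E1 \<inter> {u0 - \<epsilon>..u0 + \<epsilon>})" "z \<in> (\<lambda>x. x + s) ` uminus ` \<psi> ` (E2 \<inter> {v0 - \<epsilon>..v0 + \<epsilon>})"
    proof -
      have "\<exists>z. z \<in> \<psi> ` (E1 \<inter> {u0 - \<epsilon>..u0 + \<epsilon>}) \<and> z \<in> (\<lambda>x. x + s) ` uminus ` \<psi> ` (E2 \<inter> {v0 - \<epsilon>..v0 + \<epsilon>})"
      proof (rule gap_lemma[OF S1' S2'])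
        show "0 < \<tau>" using t1' by simp
        show "pc1 I0 \<and> u0 - \<epsilon> \<le> lo1 I0 \<and> hi1 I0 \<le> u0 + \<epsilon>" using I0 reg1 a0_def a1_def by auto
        show "pc2 J \<and> v0 - \<epsilon> \<le> lo2 J \<and> hi2 J \<le> v0 + \<epsilon>" using J reg2 b0_def b1_def by auto
        show "\<psi> (lo1 I0) \<le> - \<psi> (lo2 J) + s" using s1 \<psi>_def a0_def b0_def by simp
        show "- \<psi> (hi2 J) + s \<le> \<psi> (hi1 I0)" using s2 \<psi>_def a1_def b1_def by simp
        show "M2 * g2 J \<le> \<psi> (hi1 I0) - \<psi> (lo1 I0)" using condA lA a0_def a1_def by simp
        show "M1 * g1 I0 \<le> - \<psi> (lo2 J) + s - (- \<psi> (hi2 J) + s)" using condB lB b0_def b1_def by simp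
      qed
      then show ?thesis using that by blast
    qed
    obtain u where u: "u \<in> E1" "u0 - \<epsilon> \<le> u" "z = \<psi> u" using z(1) by auto
    obtain v where v: "v \<in> E2" "v0 - \<epsilon> \<le> v" "z = - \<psi> v + s" using z(2) by auto
    have uvpos: "0 < u" "0 < v" using u v ep by auto
    obtain x where x: "x \<in> C" "\<bar>u\<bar> = \<bar>x - t1\<bar>" using E1(4) u by blast
    obtain y where y: "y \<in> C" "\<bar>v\<bar> = \<bar>y - t2\<bar>" using E2(4) v by blast
    have sum: "\<bar>x - t1\<bar> powr \<beta> + \<bar>y - t2\<bar> powr \<beta> = s"
      using u v x y uvpos \<psi>_def by auto
    have "beta_norm \<beta> ((x, y) - (t1, t2)) = r"
      unfolding beta_norm_def using sum s_def rpos bpos by (simp add: powr_powr)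
    then show ?thesis unfolding pinned_dist_def using x y by blast
  qed
  show ?thesis using dl r12 main by blast
qed



theorem mainTheorem5:
  fixes C :: "real set" and \<alpha> :: real
  assumes "cantor_set C" and "thickness C > 1" and "\<alpha> > 1"
  shows "\<forall>t :: real \<times> real. interior (pinned_dist \<alpha> t C) \<noteq> {} \<and>
           (\<exists>\<delta>>0. \<delta> < \<alpha> \<and>
              interior (\<Inter>\<beta>\<in>{\<alpha> - \<delta> <..< \<alpha> + \<delta>}. pinned_dist \<beta> t C) \<noteq> {})"
proof
  fix t :: "real \<times> real"
  obtain t1 t2 where t: "t = (t1, t2)" by force
  obtain \<delta> r1 r2 where d: "\<delta> > 0" "\<delta> < \<alpha>" "r1 < r2"
     "\<And>\<beta> r. \<bar>\<beta> - \<alpha>\<bar> < \<delta> \<Longrightarrow> r1 < r \<Longrightarrow> r < r2 \<Longrightarrow> r \<in> pinned_dist \<beta> (t1,t2) C"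
    using core[OF assms, of t1 t2] by blast
  have sub: "{r1<..<r2} \<subseteq> (\<Inter>\<beta>\<in>{\<alpha> - \<delta> <..< \<alpha> + \<delta>}. pinned_dist \<beta> t C)"
    using d(4) t by (auto simp: abs_less_iff)
  then have int: "{r1<..<r2} \<subseteq> interior (\<Inter>\<beta>\<in>{\<alpha> - \<delta> <..< \<alpha> + \<delta>}. pinned_dist \<beta> t C)"
    by (intro interior_maximal) auto
  have ne: "{r1<..<r2} \<noteq> {}" using d(3) by auto
  have "(\<Inter>\<beta>\<in>{\<alpha> - \<delta> <..< \<alpha> + \<delta>}. pinned_dist \<beta> t C) \<subseteq> pinned_dist \<alpha> t C"
    using d(1) by auto
  then have "interior (\<Inter>\<beta>\<in>{\<alpha> - \<delta> <..< \<alpha> + \<delta>}. pinned_dist \<beta> t C) \<subseteq> interior (pinned_dist \<alpha> t C)"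
    by (rule interior_mono)
  then show "interior (pinned_dist \<alpha> t C) \<noteq> {} \<and>
           (\<exists>\<delta>>0. \<delta> < \<alpha> \<and> interior (\<Inter>\<beta>\<in>{\<alpha> - \<delta> <..< \<alpha> + \<delta>}. pinned_dist \<beta> t C) \<noteq> {})"
    using int ne d(1,2) by blast
qed


end
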